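(* Fix a finite algebraic type and a pseudovariety $\mathsf U$ of algebras of this type. Let $\Sigma$ be a set of identities, that is, equalities $u=v$ between terms (regarded as $\mathsf U$-pseudoidentities via the natural images of terms in the free pro-$\mathsf U$ algebras), such that the variety of all algebras of the given type satisfying $\Sigma$ is locally finite. Then $\Sigma$ is h-strong within $\mathsf U$.
   Context: A pseudovariety is a nonempty class of finite algebras of a fixed finite type (finite set of finitary operation symbols) closed under homomorphic images, subalgebras and finite direct products. A variety is locally finite if all its finitely generated algebras are finite. For a pseudovariety $\mathsf U$ and a finite set $A$, $\Omega_A\mathsf U$ denotes the free pro-$\mathsf U$ algebra on $A$ (the inverse limit of all $A$-generated members of $\mathsf U$); it is a compact metrizable topological algebra and every map from $A$ into a pro-$\mathsf U$ algebra $T$ extends uniquely to a continuous homomorphism $\Omega_A\mathsf U\to T$. A $\mathsf U$-pseudoidentity is a formal equality $u=v$ with $u,v\in\Omega_B\mathsf U$ for some finite set $B$; it holds in $T\in\mathsf U$ if $\hat\varphi(u)=\hat\varphi(v)$ for every map $\varphi:B\to T$ with continuous homomorphic extension $\hat\varphi$. For a set $\Sigma$ of $\mathsf U$-pseudoidentities, $[\![\Sigma]\!]_{\mathsf U}$ is the class of members of $\mathsf U$ satisfying all of $\Sigma$. Provability: for a finite set $A$ define relations $\Sigma_\alpha\subseteq\Omega_A\mathsf U\times\Omega_A\mathsf U$ by transfinite recursion: $\Sigma_0$ consists of all pairs $(\mathbf t(\varphi(u),w_1,\dots,w_n),\mathbf t(\varphi(v),w_1,\dots,w_n))$ where $u=v$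 or $v=u$ belongs to $\Sigma$ with $u,v\in\Omega_B\mathsf U$, $\varphi:\Omega_B\mathsf U\to\Omega_A\mathsf U$ is a continuous homomorphism, $\mathbf t$ is a term in the basic operations and $w_i\in\Omega_A\mathsf U$; $\Sigma_{2\alpha+1}$ is the transitive closure of $\Sigma_{2\alpha}$; $\Sigma_{2\alpha+2}$ is the topological closure of $\Sigma_{2\alpha+1}$ in $\Omega_A\mathsf U\times\Omega_A\mathsf U$; $\Sigma_\lambda=\bigcup_{\beta<\lambda}\Sigma_\beta$ for limit ordinals $\lambda$. Let $\tilde\Sigma=\bigcup_\alpha\Sigma_\alpha$. A pseudoidentity $u=v$ with $u,v\in\Omega_A\mathsf U$ is provable from $\Sigma$ if $(u,v)\in\tilde\Sigma$. A set $\Sigma$ of $\mathsf U$-pseudoidentities is h-strong within $\mathsf U$ if every $\mathsf U$-pseudoidentity valid in $[\![\Sigma]\!]_{\mathsf U}$ is provable from $\Sigma$. *)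

theory Defs
  imports "HOL-Analysis.Analysis"
begin

text \<open>An algebra is a pair (carrier, interpretation of the operations);
the interpretation is only relevant on argument lists of the right length lying in
the carrier.\<close>

type_synonym ('f, 'a) alg = "'a set \<times> ('f \<Rightarrow> 'a list \<Rightarrow> 'a)"

definition ua_carrier :: "('f, 'a) alg \<Rightarrow> 'a set" where
  "ua_carrier S = fst S"

definition ua_ops :: "('f, 'a) alg \<Rightarrow> 'f \<Rightarrow> 'a list \<Rightarrow> 'a" where
  "ua_ops S = snd S"

definition is_alg :: "('f \<Rightarrow> nat) \<Rightarrow> ('f, 'a) alg \<Rightarrow> bool" where
  "is_alg ar S \<longleftrightarrow> (\<forall>f xs. set xs \<subseteq> ua_carrier S \<and> length xs = ar f
       \<longrightarrow> ua_ops S f xs \<in> ua_carrier S)"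

definition ua_hom :: "('f \<Rightarrow> nat) \<Rightarrow> ('f, 'a) alg \<Rightarrow> ('f, 'b) alg \<Rightarrow> ('a \<Rightarrow> 'b) \<Rightarrow> bool" where
  "ua_hom ar S T h \<longleftrightarrow> h \<in> ua_carrier S \<rightarrow> ua_carrier T \<and>
     (\<forall>f xs. set xs \<subseteq> ua_carrier S \<and> length xs = ar f
        \<longrightarrow> h (ua_ops S f xs) = ua_ops T f (map h xs))"

definition ua_closed :: "('f \<Rightarrow> nat) \<Rightarrow> ('f, 'a) alg \<Rightarrow> 'a set \<Rightarrow> bool" where
  "ua_closed ar S Y \<longleftrightarrow> (\<forall>f xs. set xs \<subseteq> Y \<and> length xs = ar f \<longrightarrow> ua_ops S f xs \<in> Y)"

definition ua_generated :: "('f \<Rightarrow> nat) \<Rightarrow> ('f, 'a) alg \<Rightarrow> 'a set \<Rightarrow> 'a set" where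
  "ua_generated ar S X = \<Inter>{Y. X \<subseteq> Y \<and> Y \<subseteq> ua_carrier S \<and> ua_closed ar S Y}"

definition prod_alg :: "'i set \<Rightarrow> ('i \<Rightarrow> ('f, 'a) alg) \<Rightarrow> ('f, 'i \<Rightarrow> 'a) alg" where
  "prod_alg I Sf = (PiE I (\<lambda>i. ua_carrier (Sf i)),
     (\<lambda>f xs. \<lambda>i\<in>I. ua_ops (Sf i) f (map (\<lambda>x. x i) xs)))"

text \<open>A pseudovariety is represented by the set of its members whose carrier is a
(finite) set of natural numbers; every finite algebra is isomorphic to such a member,
and all closure properties are stated up to isomorphism (via homomorphic images).\<close>

definition pseudovariety :: "('f \<Rightarrow> nat) \<Rightarrow> ('f, nat) alg set \<Rightarrow> bool" where
  "pseudovariety ar U \<longleftrightarrow>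
     U \<noteq> {} \<and>
     (\<forall>S\<in>U. is_alg ar S \<and> finite (ua_carrier S)) \<and>
     \<comment> \<open>homomorphic images\<close>
     (\<forall>S\<in>U. \<forall>T :: ('f, nat) alg. is_alg ar T \<and>
         (\<exists>h. ua_hom ar S T h \<and> h ` ua_carrier S = ua_carrier T) \<longrightarrow> T \<in> U) \<and>
     \<comment> \<open>subalgebras\<close>
     (\<forall>S\<in>U. \<forall>T :: ('f, nat) alg. ua_carrier T \<subseteq> ua_carrier S \<and>
         ua_closed ar S (ua_carrier T) \<and>
         (\<forall>f xs. set xs \<subseteq> ua_carrier T \<and> length xs = ar f \<longrightarrow> ua_ops T f xs = ua_ops S f xs)
         \<longrightarrow> T \<in> U) \<and>
     \<comment> \<open>finite direct products (up to isomorphism)\<close>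
     (\<forall>(I :: nat set) Sf. finite I \<and> (\<forall>i\<in>I. Sf i \<in> U) \<longrightarrow>
        (\<forall>T :: ('f, nat) alg. is_alg ar T \<and>
           (\<exists>h. ua_hom ar (prod_alg I Sf) T h \<and>
                bij_betw h (ua_carrier (prod_alg I Sf)) (ua_carrier T)) \<longrightarrow> T \<in> U))"

datatype ('f, 'v) trm = Var 'v | App 'f "('f, 'v) trm list"

fun wf_trm :: "('f \<Rightarrow> nat) \<Rightarrow> ('f, 'v) trm \<Rightarrow> bool" where
  "wf_trm ar (Var x) = True"
| "wf_trm ar (App f ts) = (length ts = ar f \<and> list_all (wf_trm ar) ts)"

fun trm_vars :: "('f, 'v) trm \<Rightarrow> 'v set" where
  "trm_vars (Var x) = {x}"
| "trm_vars (App f ts) = \<Union>(set (map trm_vars ts))"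

fun eval_trm :: "('f \<Rightarrow> 'a list \<Rightarrow> 'a) \<Rightarrow> ('v \<Rightarrow> 'a) \<Rightarrow> ('f, 'v) trm \<Rightarrow> 'a" where
  "eval_trm F \<sigma> (Var x) = \<sigma> x"
| "eval_trm F \<sigma> (App f ts) = F f (map (eval_trm F \<sigma>) ts)"

definition sat_identity :: "('f, 'a) alg \<Rightarrow> ('f, 'v) trm \<times> ('f, 'v) trm \<Rightarrow> bool" where
  "sat_identity M e \<longleftrightarrow> (\<forall>\<sigma>. (\<forall>x. \<sigma> x \<in> ua_carrier M) \<longrightarrow>
      eval_trm (ua_ops M) \<sigma> (fst e) = eval_trm (ua_ops M) \<sigma> (snd e))"

text \<open>Finitely generated algebras of a finite type are countable,
so it suffices to consider algebras with carrier a set of natural numbers.\<close>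

definition locally_finite_variety :: "('f \<Rightarrow> nat) \<Rightarrow> (('f, 'v) trm \<times> ('f, 'v) trm) set \<Rightarrow> bool" where
  "locally_finite_variety ar \<Sigma> \<longleftrightarrow>
     (\<forall>M :: ('f, nat) alg. is_alg ar M \<and> (\<forall>e\<in>\<Sigma>. sat_identity M e) \<longrightarrow>
        (\<forall>G. finite G \<and> G \<subseteq> ua_carrier M \<and> ua_generated ar M G = ua_carrier M
             \<longrightarrow> finite (ua_carrier M)))"

text \<open>Omega_A U is realised as the inverse limit of the A-generated members of U:
it is indexed by the pairs (S, \<phi>) with S \<in> U and \<phi> : A \<rightarrow> S a generating map; an element
is a compatible family of elements x(S,\<phi>) \<in> S, compatibility meaning preservation by
every homomorphism between such pairs that respects the generators.\<close>

definition Omega_idx :: "('f \<Rightarrow> nat) \<Rightarrow> ('f, nat) alg set \<Rightarrow> 'v set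
    \<Rightarrow> (('f, nat) alg \<times> ('v \<Rightarrow> nat)) set" where
  "Omega_idx ar U A = {(S, \<phi>). S \<in> U \<and> \<phi> \<in> A \<rightarrow>\<^sub>E ua_carrier S \<and>
       ua_generated ar S (\<phi> ` A) = ua_carrier S}"

definition Omega :: "('f \<Rightarrow> nat) \<Rightarrow> ('f, nat) alg set \<Rightarrow> 'v set
    \<Rightarrow> ((('f, nat) alg \<times> ('v \<Rightarrow> nat)) \<Rightarrow> nat) set" where
  "Omega ar U A = {x. x \<in> PiE (Omega_idx ar U A) (\<lambda>k. ua_carrier (fst k)) \<and>
     (\<forall>S \<phi> T \<psi> h. (S, \<phi>) \<in> Omega_idx ar U A \<and> (T, \<psi>) \<in> Omega_idx ar U A \<and>
        ua_hom ar S T h \<and> (\<forall>a\<in>A. h (\<phi> a) = \<psi> a) \<longrightarrow> h (x (S, \<phi>)) = x (T, \<psi>))}"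

definition Omega_op :: "('f \<Rightarrow> nat) \<Rightarrow> ('f, nat) alg set \<Rightarrow> 'v set
    \<Rightarrow> 'f \<Rightarrow> ((('f, nat) alg \<times> ('v \<Rightarrow> nat)) \<Rightarrow> nat) list
    \<Rightarrow> (('f, nat) alg \<times> ('v \<Rightarrow> nat)) \<Rightarrow> nat" where
  "Omega_op ar U A f xs = (\<lambda>k\<in>Omega_idx ar U A. ua_ops (fst k) f (map (\<lambda>x. x k) xs))"

definition Omega_alg :: "('f \<Rightarrow> nat) \<Rightarrow> ('f, nat) alg set \<Rightarrow> 'v set
    \<Rightarrow> ('f, (('f, nat) alg \<times> ('v \<Rightarrow> nat)) \<Rightarrow> nat) alg" where
  "Omega_alg ar U A = (Omega ar U A, Omega_op ar U A)"

definition Omega_top :: "('f \<Rightarrow> nat) \<Rightarrow> ('f, nat) alg set \<Rightarrow> 'v set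
    \<Rightarrow> ((('f, nat) alg \<times> ('v \<Rightarrow> nat)) \<Rightarrow> nat) topology" where
  "Omega_top ar U A = subtopology
     (product_topology (\<lambda>k. discrete_topology (ua_carrier (fst k))) (Omega_idx ar U A))
     (Omega ar U A)"

definition Omega_gen :: "('f \<Rightarrow> nat) \<Rightarrow> ('f, nat) alg set \<Rightarrow> 'v set \<Rightarrow> 'v
    \<Rightarrow> (('f, nat) alg \<times> ('v \<Rightarrow> nat)) \<Rightarrow> nat" where
  "Omega_gen ar U A a = (\<lambda>k\<in>Omega_idx ar U A. snd k a)"

definition Omega_trm :: "('f \<Rightarrow> nat) \<Rightarrow> ('f, nat) alg set \<Rightarrow> 'v set \<Rightarrow> ('f, 'v) trm
    \<Rightarrow> (('f, nat) alg \<times> ('v \<Rightarrow> nat)) \<Rightarrow> nat" where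
  "Omega_trm ar U A t = eval_trm (Omega_op ar U A) (Omega_gen ar U A) t"

definition cont_hom_to_alg :: "('f \<Rightarrow> nat) \<Rightarrow> ('f, nat) alg set \<Rightarrow> 'v set \<Rightarrow> ('f, nat) alg
    \<Rightarrow> (((('f, nat) alg \<times> ('v \<Rightarrow> nat)) \<Rightarrow> nat) \<Rightarrow> nat) \<Rightarrow> bool" where
  "cont_hom_to_alg ar U B T h \<longleftrightarrow> ua_hom ar (Omega_alg ar U B) T h \<and>
     continuous_map (Omega_top ar U B) (discrete_topology (ua_carrier T)) h"

definition cont_hom_Omega :: "('f \<Rightarrow> nat) \<Rightarrow> ('f, nat) alg set \<Rightarrow> 'v set \<Rightarrow> 'w set
    \<Rightarrow> (((('f, nat) alg \<times> ('v \<Rightarrow> nat)) \<Rightarrow> nat) \<Rightarrow> ((('f, nat) alg \<times> ('w \<Rightarrow> nat)) \<Rightarrow> nat)) \<Rightarrow> bool" where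
  "cont_hom_Omega ar U B A g \<longleftrightarrow> ua_hom ar (Omega_alg ar U B) (Omega_alg ar U A) g \<and>
     continuous_map (Omega_top ar U B) (Omega_top ar U A) g"

definition pi_holds :: "('f \<Rightarrow> nat) \<Rightarrow> ('f, nat) alg set \<Rightarrow> ('f, nat) alg \<Rightarrow> 'v set
    \<Rightarrow> ((('f, nat) alg \<times> ('v \<Rightarrow> nat)) \<Rightarrow> nat) \<Rightarrow> ((('f, nat) alg \<times> ('v \<Rightarrow> nat)) \<Rightarrow> nat) \<Rightarrow> bool" where
  "pi_holds ar U T B u v \<longleftrightarrow>
     (\<forall>\<phi> h. \<phi> \<in> B \<rightarrow> ua_carrier T \<and> cont_hom_to_alg ar U B T h \<and>
        (\<forall>b\<in>B. h (Omega_gen ar U B b) = \<phi> b) \<longrightarrow> h u = h v)"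

text \<open>An identity (u, v) of terms, regarded as the pseudoidentity over the finite set
B of variables occurring in it.\<close>

definition id_vars :: "('f, 'v) trm \<times> ('f, 'v) trm \<Rightarrow> 'v set" where
  "id_vars e = trm_vars (fst e) \<union> trm_vars (snd e)"

definition in_model :: "('f \<Rightarrow> nat) \<Rightarrow> ('f, nat) alg set \<Rightarrow> (('f, 'v) trm \<times> ('f, 'v) trm) set
    \<Rightarrow> ('f, nat) alg \<Rightarrow> bool" where
  "in_model ar U \<Sigma> T \<longleftrightarrow> T \<in> U \<and>
     (\<forall>e\<in>\<Sigma>. pi_holds ar U T (id_vars e)
        (Omega_trm ar U (id_vars e) (fst e)) (Omega_trm ar U (id_vars e) (snd e)))"

text \<open>The relation Sigma_0 on Omega_A U.  The term t is any term; its variable 0 is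
substituted by \<phi>(u) and the remaining variables by arbitrary elements w_i.\<close>

definition Sigma0 :: "('f \<Rightarrow> nat) \<Rightarrow> ('f, nat) alg set \<Rightarrow> (('f, 'v) trm \<times> ('f, 'v) trm) set
    \<Rightarrow> 'w set \<Rightarrow> (((('f, nat) alg \<times> ('w \<Rightarrow> nat)) \<Rightarrow> nat) \<times> ((('f, nat) alg \<times> ('w \<Rightarrow> nat)) \<Rightarrow> nat)) set" where
  "Sigma0 ar U \<Sigma> A =
     {(eval_trm (Omega_op ar U A) (\<sigma>(0 := g p)) t, eval_trm (Omega_op ar U A) (\<sigma>(0 := g q)) t) |
        e p q g t \<sigma>. e \<in> \<Sigma> \<and>
          ((p = Omega_trm ar U (id_vars e) (fst e) \<and> q = Omega_trm ar U (id_vars e) (snd e)) \<or>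
           (p = Omega_trm ar U (id_vars e) (snd e) \<and> q = Omega_trm ar U (id_vars e) (fst e))) \<and>
          cont_hom_Omega ar U (id_vars e) A g \<and>
          wf_trm ar (t :: ('f, nat) trm) \<and> (\<forall>i. \<sigma> i \<in> Omega ar U A)}"

text \<open>The union of the transfinite sequence Sigma_alpha (alternately transitive closure and
topological closure in Omega_A U \<times> Omega_A U, unions at limits) is the least
relation containing Sigma_0 which is transitive and closed.\<close>

definition Sigma_tilde :: "('f \<Rightarrow> nat) \<Rightarrow> ('f, nat) alg set \<Rightarrow> (('f, 'v) trm \<times> ('f, 'v) trm) set
    \<Rightarrow> 'w set \<Rightarrow> (((('f, nat) alg \<times> ('w \<Rightarrow> nat)) \<Rightarrow> nat) \<times> ((('f, nat) alg \<times> ('w \<Rightarrow> nat)) \<Rightarrow> nat)) set" where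
  "Sigma_tilde ar U \<Sigma> A = \<Inter>{R. Sigma0 ar U \<Sigma> A \<subseteq> R \<and> trans R \<and>
      closedin (prod_topology (Omega_top ar U A) (Omega_top ar U A)) R}"

definition provable :: "('f \<Rightarrow> nat) \<Rightarrow> ('f, nat) alg set \<Rightarrow> (('f, 'v) trm \<times> ('f, 'v) trm) set
    \<Rightarrow> 'w set \<Rightarrow> ((('f, nat) alg \<times> ('w \<Rightarrow> nat)) \<Rightarrow> nat) \<Rightarrow> ((('f, nat) alg \<times> ('w \<Rightarrow> nat)) \<Rightarrow> nat) \<Rightarrow> bool" where
  "provable ar U \<Sigma> A u v \<longleftrightarrow> u = v \<or> (u, v) \<in> Sigma_tilde ar U \<Sigma> A"

definition h_strong :: "('f \<Rightarrow> nat) \<Rightarrow> ('f, nat) alg set \<Rightarrow> (('f, nat) trm \<times> ('f, nat) trm) set \<Rightarrow> bool" where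
  "h_strong ar U \<Sigma> \<longleftrightarrow>
     (\<forall>A :: nat set. finite A \<longrightarrow>
       (\<forall>u\<in>Omega ar U A. \<forall>v\<in>Omega ar U A.
          (\<forall>T. in_model ar U \<Sigma> T \<longrightarrow> pi_holds ar U T A u v) \<longrightarrow> provable ar U \<Sigma> A u v))"

end

theory Submission
  imports Defs "HOL-Library.Countable"
begin


instance trm :: (countable, countable) countable
  by countable_datatype

lemma list_choice: "\<forall>x\<in>set xs. \<exists>y. P x y \<Longrightarrow> \<exists>ys. list_all2 P xs ys"
proof (induction xs)
  case Nil then show ?case by auto
next
  case (Cons a xs)
  then obtain y ys where "P a y" "list_all2 P xs ys" by auto
  then show ?case by (intro exI[of _ "y#ys"]) auto
qed

lemma eval_in:
  assumes "is_alg ar S" "wf_trm ar t" "\<forall>x\<in>trm_vars t. \<sigma> x \<in> ua_carrier S"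
  shows "eval_trm (ua_ops S) \<sigma> t \<in> ua_carrier S"
  using assms(2,3)
proof (induction t)
  case (Var x) then show ?case by simp
next
  case (App f ts)
  have "set (map (eval_trm (ua_ops S) \<sigma>) ts) \<subseteq> ua_carrier S"
    using App by (auto simp: list_all_iff)
  then show ?case using App.prems assms(1) unfolding is_alg_def by auto
qed

lemma eval_cong:
  "(\<forall>x\<in>trm_vars t. \<sigma> x = \<tau> x) \<Longrightarrow> eval_trm F \<sigma> t = eval_trm F \<tau> t"
proof (induction t)
  case (App f ts)
  have "map (eval_trm F \<sigma>) ts = map (eval_trm F \<tau>) ts"
    using App by (intro map_cong) auto
  then show ?case by (simp only: eval_trm.simps)
qed simp

lemma hom_eval:
  assumes "ua_hom ar S T h" "is_alg ar S" "wf_trm ar t" "\<forall>x\<in>trm_vars t. \<sigma> x \<in> ua_carrier S"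
  shows "h (eval_trm (ua_ops S) \<sigma> t) = eval_trm (ua_ops T) (\<lambda>x. h (\<sigma> x)) t"
  using assms(3,4)
proof (induction t)
  case (Var x) then show ?case by simp
next
  case (App f ts)
  have sub: "set (map (eval_trm (ua_ops S) \<sigma>) ts) \<subseteq> ua_carrier S"
    using App.prems eval_in[OF assms(2)] by (force simp: list_all_iff)
  have "h (eval_trm (ua_ops S) \<sigma> (App f ts)) = ua_ops T f (map h (map (eval_trm (ua_ops S) \<sigma>) ts))"
    using assms(1) sub App.prems unfolding ua_hom_def by simp
  also have "map h (map (eval_trm (ua_ops S) \<sigma>) ts) = map (eval_trm (ua_ops T) (\<lambda>x. h (\<sigma> x))) ts"
    using App by (auto simp: list_all_iff)
  finally show ?case by simp
qed

definition evals :: "('f \<Rightarrow> nat) \<Rightarrow> ('f, 'a) alg \<Rightarrow> ('v \<Rightarrow> 'a) \<Rightarrow> 'v set \<Rightarrow> 'a set" where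
  "evals ar S \<phi> A = {eval_trm (ua_ops S) \<phi> t | t. wf_trm ar t \<and> trm_vars t \<subseteq> A}"

lemma evals_closed:
  "ua_closed ar S (evals ar S \<phi> A)"
  unfolding ua_closed_def
proof (intro allI impI)
  fix f xs assume a: "set xs \<subseteq> evals ar S \<phi> A \<and> length xs = ar f"
  then have "\<forall>x\<in>set xs. \<exists>t. wf_trm ar t \<and> trm_vars t \<subseteq> A \<and> x = eval_trm (ua_ops S) \<phi> t"
    unfolding evals_def by blast
  from list_choice[OF this] obtain ts where
    ts: "list_all2 (\<lambda>x t. wf_trm ar t \<and> trm_vars t \<subseteq> A \<and> x = eval_trm (ua_ops S) \<phi> t) xs ts" by blast
  then have "xs = map (eval_trm (ua_ops S) \<phi>) ts"
    by (induction rule: list_all2_induct) auto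
  moreover have "\<forall>t\<in>set ts. wf_trm ar t \<and> trm_vars t \<subseteq> A"
    using ts by (induction rule: list_all2_induct) auto
  then have "wf_trm ar (App f ts) \<and> trm_vars (App f ts) \<subseteq> A"
    using a list_all2_lengthD[OF ts] by (auto simp: list_all_iff)
  ultimately show "ua_ops S f xs \<in> evals ar S \<phi> A"
    unfolding evals_def by (intro CollectI exI[of _ "App f ts"]) auto
qed

lemma evals_sub: "is_alg ar S \<Longrightarrow> \<phi> ` A \<subseteq> ua_carrier S \<Longrightarrow> evals ar S \<phi> A \<subseteq> ua_carrier S"
  unfolding evals_def using eval_in by fastforce

lemma evals_min:
  assumes "\<phi> ` A \<subseteq> Y" "ua_closed ar S Y"
  shows "evals ar S \<phi> A \<subseteq> Y"
proof
  fix x assume "x \<in> evals ar S \<phi> A"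
  then obtain t where t: "wf_trm ar t" "trm_vars t \<subseteq> A" "x = eval_trm (ua_ops S) \<phi> t"
    unfolding evals_def by blast
  have "eval_trm (ua_ops S) \<phi> t \<in> Y" using t(1,2)
  proof (induction t)
    case (Var y) then show ?case using assms(1) by auto
  next
    case (App f ts)
    then have "set (map (eval_trm (ua_ops S) \<phi>) ts) \<subseteq> Y" by (auto simp: list_all_iff)
    then show ?case using App.prems assms(2) unfolding ua_closed_def by auto
  qed
  then show "x \<in> Y" using t by simp
qed

lemma gen_eval:
  assumes "is_alg ar S" "\<phi> ` A \<subseteq> ua_carrier S"
  shows "ua_generated ar S (\<phi> ` A) = evals ar S \<phi> A"
proof
  have "\<phi> ` A \<subseteq> evals ar S \<phi> A"
    unfolding evals_def by (force intro: exI[of _ "Var _"])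
  then show "ua_generated ar S (\<phi> ` A) \<subseteq> evals ar S \<phi> A"
    unfolding ua_generated_def using evals_closed evals_sub[OF assms] by blast
  show "evals ar S \<phi> A \<subseteq> ua_generated ar S (\<phi> ` A)"
    unfolding ua_generated_def using evals_min by blast
qed




locale PV =
  fixes ar :: "'f \<Rightarrow> nat" and U :: "('f, nat) alg set"
  assumes pv: "pseudovariety ar U"
begin

lemma U_alg: "S \<in> U \<Longrightarrow> is_alg ar S"
  using pv[unfolded pseudovariety_def, THEN conjunct2, THEN conjunct1] by blast

lemma U_fin: "S \<in> U \<Longrightarrow> finite (ua_carrier S)"
  using pv[unfolded pseudovariety_def, THEN conjunct2, THEN conjunct1] by blast

lemma U_hom_image:
  "S \<in> U \<Longrightarrow> is_alg ar T \<Longrightarrow> ua_hom ar S T h \<Longrightarrow> h ` ua_carrier S = ua_carrier T \<Longrightarrow> T \<in> U"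
  using pv[unfolded pseudovariety_def, THEN conjunct2, THEN conjunct2, THEN conjunct1] by blast

lemma U_sub:
  "S \<in> U \<Longrightarrow> ua_carrier T \<subseteq> ua_carrier S \<Longrightarrow> ua_closed ar S (ua_carrier T) \<Longrightarrow>
   (\<And>f xs. set xs \<subseteq> ua_carrier T \<Longrightarrow> length xs = ar f \<Longrightarrow> ua_ops T f xs = ua_ops S f xs) \<Longrightarrow> T \<in> U"
  using pv[unfolded pseudovariety_def, THEN conjunct2, THEN conjunct2, THEN conjunct2, THEN conjunct1] by blast

lemma U_prod:
  "finite (I :: nat set) \<Longrightarrow> (\<And>i. i \<in> I \<Longrightarrow> Sf i \<in> U) \<Longrightarrow> is_alg ar T \<Longrightarrow>
   ua_hom ar (prod_alg I Sf) T h \<Longrightarrow> bij_betw h (ua_carrier (prod_alg I Sf)) (ua_carrier T) \<Longrightarrow> T \<in> U"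
  using pv[unfolded pseudovariety_def, THEN conjunct2, THEN conjunct2, THEN conjunct2, THEN conjunct2] by blast

lemma idx_D:
  assumes "k \<in> Omega_idx ar U A"
  shows "fst k \<in> U" "snd k \<in> A \<rightarrow>\<^sub>E ua_carrier (fst k)"
    "ua_generated ar (fst k) (snd k ` A) = ua_carrier (fst k)"
  using assms unfolding Omega_idx_def by auto

lemma Omega_op_coord:
  "k \<in> Omega_idx ar U A \<Longrightarrow> Omega_op ar U A f xs k = ua_ops (fst k) f (map (\<lambda>x. x k) xs)"
  unfolding Omega_op_def by simp

lemma Omega_D:
  assumes "x \<in> Omega ar U A"
  shows "x \<in> PiE (Omega_idx ar U A) (\<lambda>k. ua_carrier (fst k))"
    "\<And>S \<phi> T \<psi> h. (S, \<phi>) \<in> Omega_idx ar U A \<Longrightarrow> (T, \<psi>) \<in> Omega_idx ar U A \<Longrightarrow>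
        ua_hom ar S T h \<Longrightarrow> (\<forall>a\<in>A. h (\<phi> a) = \<psi> a) \<Longrightarrow> h (x (S, \<phi>)) = x (T, \<psi>)"
  using assms unfolding Omega_def by blast+

lemma Omega_coord_in:
  "x \<in> Omega ar U A \<Longrightarrow> k \<in> Omega_idx ar U A \<Longrightarrow> x k \<in> ua_carrier (fst k)"
  using Omega_D(1) by blast

lemma Omega_op_in:
  assumes "set xs \<subseteq> Omega ar U A" "length xs = ar f"
  shows "Omega_op ar U A f xs \<in> Omega ar U A"
  unfolding Omega_def
proof (intro CollectI conjI allI impI)
  have "ua_ops (fst k) f (map (\<lambda>x. x k) xs) \<in> ua_carrier (fst k)" if k: "k \<in> Omega_idx ar U A" for k
  proof -
    have "is_alg ar (fst k)" using idx_D(1)[OF k] U_alg by blast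
    moreover have "set (map (\<lambda>x. x k) xs) \<subseteq> ua_carrier (fst k)"
      using assms(1) Omega_coord_in[OF _ k] by auto
    ultimately show ?thesis using assms(2) unfolding is_alg_def by auto
  qed
  then show "Omega_op ar U A f xs \<in> (\<Pi>\<^sub>E k\<in>Omega_idx ar U A. ua_carrier (fst k))"
    unfolding Omega_op_def by auto
next
  fix S \<phi> T \<psi> h
  assume a: "(S, \<phi>) \<in> Omega_idx ar U A \<and> (T, \<psi>) \<in> Omega_idx ar U A \<and> ua_hom ar S T h \<and> (\<forall>a\<in>A. h (\<phi> a) = \<psi> a)"
  have sub: "set (map (\<lambda>x. x (S, \<phi>)) xs) \<subseteq> ua_carrier S"
    using assms(1) Omega_coord_in[of _ A "(S,\<phi>)"] a by auto
  have "h (Omega_op ar U A f xs (S, \<phi>)) = h (ua_ops S f (map (\<lambda>x. x (S, \<phi>)) xs))"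
    using a by (simp add: Omega_op_coord)
  also have "\<dots> = ua_ops T f (map h (map (\<lambda>x. x (S, \<phi>)) xs))"
    using a sub assms(2) unfolding ua_hom_def by auto
  also have "map h (map (\<lambda>x. x (S, \<phi>)) xs) = map (\<lambda>x. x (T, \<psi>)) xs"
  proof -
    have "\<forall>x\<in>set xs. h (x (S, \<phi>)) = x (T, \<psi>)" using assms(1) a Omega_D(2)[of _ A S \<phi> T \<psi> h] by auto
    then show ?thesis by (simp add: map_eq_conv)
  qed
  also have "ua_ops T f \<dots> = Omega_op ar U A f xs (T, \<psi>)"
    using a by (simp add: Omega_op_coord)
  finally show "h (Omega_op ar U A f xs (S, \<phi>)) = Omega_op ar U A f xs (T, \<psi>)" .
qed

lemma Omega_is_alg: "is_alg ar (Omega_alg ar U A)"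
  unfolding is_alg_def Omega_alg_def ua_carrier_def ua_ops_def using Omega_op_in by auto

lemma Omega_alg_simps [simp]:
  "ua_carrier (Omega_alg ar U A) = Omega ar U A" "ua_ops (Omega_alg ar U A) = Omega_op ar U A"
  unfolding Omega_alg_def ua_carrier_def ua_ops_def by auto

lemma gen_in: "a \<in> A \<Longrightarrow> Omega_gen ar U A a \<in> Omega ar U A"
  unfolding Omega_def Omega_gen_def using idx_D(2) by (auto simp: Omega_idx_def)

lemma eval_Omega:
  assumes "wf_trm ar t" "\<forall>x\<in>trm_vars t. \<rho> x \<in> Omega ar U A"
  shows "eval_trm (Omega_op ar U A) \<rho> t \<in> Omega ar U A \<and>
    (\<forall>k\<in>Omega_idx ar U A. eval_trm (Omega_op ar U A) \<rho> t k = eval_trm (ua_ops (fst k)) (\<lambda>x. \<rho> x k) t)"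
  using assms
proof (induction t)
  case (Var x) then show ?case by simp
next
  case (App f ts)
  have IH: "\<forall>s\<in>set ts. eval_trm (Omega_op ar U A) \<rho> s \<in> Omega ar U A \<and>
    (\<forall>k\<in>Omega_idx ar U A. eval_trm (Omega_op ar U A) \<rho> s k = eval_trm (ua_ops (fst k)) (\<lambda>x. \<rho> x k) s)"
    using App by (auto simp: list_all_iff)
  have "eval_trm (Omega_op ar U A) \<rho> (App f ts) \<in> Omega ar U A"
    using Omega_op_in[where xs="map (eval_trm (Omega_op ar U A) \<rho>) ts" and f=f] IH App.prems by auto
  moreover have "\<forall>k\<in>Omega_idx ar U A. eval_trm (Omega_op ar U A) \<rho> (App f ts) k = eval_trm (ua_ops (fst k)) (\<lambda>x. \<rho> x k) (App f ts)"
  proof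
    fix k assume k: "k \<in> Omega_idx ar U A"
    have "map (\<lambda>x. x k) (map (eval_trm (Omega_op ar U A) \<rho>) ts) = map (eval_trm (ua_ops (fst k)) (\<lambda>x. \<rho> x k)) ts"
      using IH k by auto
    moreover have "eval_trm (Omega_op ar U A) \<rho> (App f ts) k = ua_ops (fst k) f (map (\<lambda>x. x k) (map (eval_trm (Omega_op ar U A) \<rho>) ts))"
      using k by (simp only: eval_trm.simps Omega_op_coord)
    ultimately show "eval_trm (Omega_op ar U A) \<rho> (App f ts) k = eval_trm (ua_ops (fst k)) (\<lambda>x. \<rho> x k) (App f ts)"
      by (simp only: eval_trm.simps)
  qed
  ultimately show ?case by blast
qed

lemma Omega_trm:
  assumes "wf_trm ar t" "trm_vars t \<subseteq> A"
  shows "Omega_trm ar U A t \<in> Omega ar U A"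
    "k \<in> Omega_idx ar U A \<Longrightarrow> Omega_trm ar U A t k = eval_trm (ua_ops (fst k)) (snd k) t"
proof -
  have g: "\<forall>x\<in>trm_vars t. Omega_gen ar U A x \<in> Omega ar U A" using assms(2) gen_in[of _ A] by blast
  show "Omega_trm ar U A t \<in> Omega ar U A"
    using eval_Omega[OF assms(1) g] unfolding Omega_trm_def by blast
  assume k: "k \<in> Omega_idx ar U A"
  have "Omega_trm ar U A t k = eval_trm (ua_ops (fst k)) (\<lambda>x. Omega_gen ar U A x k) t"
    using eval_Omega[OF assms(1) g] k unfolding Omega_trm_def by blast
  also have "\<dots> = eval_trm (ua_ops (fst k)) (snd k) t"
    using assms(2) k by (intro eval_cong) (auto simp: Omega_gen_def)
  finally show "Omega_trm ar U A t k = eval_trm (ua_ops (fst k)) (snd k) t" .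
qed

definition subalg :: "('f, nat) alg \<Rightarrow> ('v \<Rightarrow> nat) \<Rightarrow> 'v set \<Rightarrow> ('f, nat) alg" where
  "subalg S \<psi> B = (ua_generated ar S (\<psi> ` B), ua_ops S)"

lemma subalg_simps [simp]:
  "ua_carrier (subalg S \<psi> B) = ua_generated ar S (\<psi> ` B)" "ua_ops (subalg S \<psi> B) = ua_ops S"
  unfolding subalg_def ua_carrier_def ua_ops_def by auto

lemma sub_idx:
  assumes S: "S \<in> U" and psi: "\<psi> ` B \<subseteq> ua_carrier S"
  shows "(subalg S \<psi> B, restrict \<psi> B) \<in> Omega_idx ar U B"
    "ua_generated ar S (\<psi> ` B) = evals ar S \<psi> B"
    "ua_generated ar S (\<psi> ` B) \<subseteq> ua_carrier S"
proof -
  have SA: "is_alg ar S" using S U_alg by blast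
  show G: "ua_generated ar S (\<psi> ` B) = evals ar S \<psi> B" using gen_eval[OF SA psi] .
  show Gs: "ua_generated ar S (\<psi> ` B) \<subseteq> ua_carrier S" using G evals_sub[OF SA psi] by simp
  have inU: "subalg S \<psi> B \<in> U"
    by (rule U_sub[OF S]) (use G Gs evals_closed[of ar S \<psi> B] in simp_all)
  have "\<psi> ` B \<subseteq> evals ar S \<psi> B" unfolding evals_def by (force intro: exI[of _ "Var _"])
  then have r: "restrict \<psi> B \<in> B \<rightarrow>\<^sub>E ua_carrier (subalg S \<psi> B)" using G by auto
  have eq: "restrict \<psi> B ` B = \<psi> ` B" by auto
  have "ua_generated ar (subalg S \<psi> B) (restrict \<psi> B ` B) = evals ar (subalg S \<psi> B) (restrict \<psi> B) B"
    by (rule gen_eval) (use U_alg[OF inU] r in auto)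
  also have "\<dots> = evals ar S \<psi> B"
  proof -
    have "\<And>t. trm_vars t \<subseteq> B \<Longrightarrow> eval_trm (ua_ops S) (restrict \<psi> B) t = eval_trm (ua_ops S) \<psi> t"
      by (rule eval_cong) auto
    then show ?thesis unfolding evals_def subalg_simps by force
  qed
  finally show "(subalg S \<psi> B, restrict \<psi> B) \<in> Omega_idx ar U B"
    using inU r G unfolding Omega_idx_def by auto
qed

end



context PV begin

lemma prod_alg_simps:
  "ua_carrier (prod_alg I Sf) = PiE I (\<lambda>i. ua_carrier (Sf i))"
  "ua_ops (prod_alg I Sf) f xs = (\<lambda>i\<in>I. ua_ops (Sf i) f (map (\<lambda>x. x i) xs))"
  unfolding prod_alg_def ua_carrier_def ua_ops_def by auto

lemma dominate:
  assumes "finite K" "K \<subseteq> Omega_idx ar U A"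
  shows "\<exists>k0 \<in> Omega_idx ar U A. \<forall>k\<in>K. \<exists>h. ua_hom ar (fst k0) (fst k) h \<and> (\<forall>a\<in>A. h (snd k0 a) = snd k a)"
proof -
  obtain ks where ks: "set ks = K" using finite_list[OF assms(1)] by blast
  define n where "n = length ks"
  define I where "I = {..<n}"
  define Sf where "Sf i = fst (ks ! i)" for i
  define CP where "CP = PiE I (\<lambda>i. ua_carrier (Sf i))"
  define enc :: "(nat \<Rightarrow> nat) \<Rightarrow> nat" where "enc f = to_nat (map f [0..<n])" for f
  define dec :: "nat \<Rightarrow> nat \<Rightarrow> nat" where "dec m = (\<lambda>i\<in>I. (from_nat m :: nat list) ! i)" for m
  have decenc: "dec (enc f) = f" if "f \<in> CP" for f
  proof
    fix i show "dec (enc f) i = f i"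
      using that unfolding dec_def enc_def CP_def I_def by (cases "i < n") (auto simp: PiE_def extensional_def)
  qed
  have Sf_U: "Sf i \<in> U" if "i \<in> I" for i
    using that assms(2) ks unfolding Sf_def I_def n_def by (auto intro!: idx_D(1))
  have Sf_alg: "is_alg ar (Sf i)" if "i \<in> I" for i using U_alg Sf_U that by blast
  define P where "P = prod_alg I Sf"
  have CP: "ua_carrier P = CP" unfolding P_def CP_def prod_alg_simps ..
  have opsP_in: "ua_ops P f xs \<in> CP" if "set xs \<subseteq> CP" "length xs = ar f" for f xs
  proof -
    have "ua_ops (Sf i) f (map (\<lambda>x. x i) xs) \<in> ua_carrier (Sf i)" if i: "i \<in> I" for i
    proof -
      have "set (map (\<lambda>x. x i) xs) \<subseteq> ua_carrier (Sf i)" using \<open>set xs \<subseteq> CP\<close> i unfolding CP_def by auto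
      then show ?thesis using Sf_alg[OF i] \<open>length xs = ar f\<close> unfolding is_alg_def by auto
    qed
    then show ?thesis unfolding P_def prod_alg_simps CP_def by auto
  qed
  define T :: "('f, nat) alg" where "T = (enc ` CP, \<lambda>g ms. enc (ua_ops P g (map dec ms)))"
  have T_simps: "ua_carrier T = enc ` CP" "ua_ops T g ms = enc (ua_ops P g (map dec ms))" for g ms
    unfolding T_def ua_carrier_def ua_ops_def by auto
  have dec_in: "dec m \<in> CP" if "m \<in> enc ` CP" for m using that decenc by auto
  have T_alg: "is_alg ar T"
    unfolding is_alg_def T_simps
  proof (intro allI impI)
    fix f xs assume "set xs \<subseteq> enc ` CP \<and> length xs = ar f"
    moreover then have "set (map dec xs) \<subseteq> CP" using dec_in by auto
    ultimately show "enc (ua_ops P f (map dec xs)) \<in> enc ` CP" using opsP_in[of "map dec xs" f] by auto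
  qed
  have mde: "map dec (map enc xs) = xs" if "set xs \<subseteq> CP" for xs
    using that decenc by (induction xs) auto
  have T_hom: "ua_hom ar P T enc"
    unfolding ua_hom_def T_simps CP using mde by auto
  have T_bij: "bij_betw enc (ua_carrier P) (ua_carrier T)"
    unfolding CP T_simps bij_betw_def by (metis decenc inj_on_inverseI)
  have T_U: "T \<in> U"
    by (rule U_prod[of I Sf T enc]) (use Sf_U T_alg T_hom T_bij in \<open>auto simp: P_def I_def\<close>)
  define phiT where "phiT a = enc (\<lambda>i\<in>I. snd (ks ! i) a)" for a
  have ksidx: "ks ! i \<in> Omega_idx ar U A" if "i \<in> I" for i
    using that assms(2) ks unfolding I_def n_def by auto
  have phiT_in0: "(\<lambda>i\<in>I. snd (ks ! i) a) \<in> CP" if "a \<in> A" for a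
    unfolding CP_def Sf_def using idx_D(2)[OF ksidx] that by auto
  have phiT_in: "phiT ` A \<subseteq> ua_carrier T" unfolding T_simps phiT_def using phiT_in0 by auto
  define k0 where "k0 = (subalg T phiT A, restrict phiT A)"
  have k0: "k0 \<in> Omega_idx ar U A" unfolding k0_def using sub_idx(1)[OF T_U phiT_in] .
  have gsub: "ua_generated ar T (phiT ` A) \<subseteq> enc ` CP" using sub_idx(3)[OF T_U phiT_in] T_simps by simp
  show ?thesis
  proof (intro bexI[OF _ k0] ballI)
    fix k assume "k \<in> K"
    then obtain i where i: "i \<in> I" "k = ks ! i" using ks unfolding I_def n_def by (auto simp: in_set_conv_nth)
    have hom: "ua_hom ar (fst k0) (fst k) (\<lambda>m. dec m i)"
      unfolding ua_hom_def
    proof (intro conjI allI impI)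
      show "(\<lambda>m. dec m i) \<in> ua_carrier (fst k0) \<rightarrow> ua_carrier (fst k)"
        using gsub dec_in i unfolding k0_def CP_def Sf_def by (auto simp: PiE_def)
    next
      fix f xs assume a: "set xs \<subseteq> ua_carrier (fst k0) \<and> length xs = ar f"
      then have "set (map dec xs) \<subseteq> CP" using gsub dec_in unfolding k0_def by auto
      then have "dec (ua_ops (fst k0) f xs) = ua_ops P f (map dec xs)"
        unfolding k0_def using a decenc opsP_in by (simp add: T_simps)
      then show "dec (ua_ops (fst k0) f xs) i = ua_ops (fst k) f (map (\<lambda>m. dec m i) xs)"
        using i unfolding P_def prod_alg_simps Sf_def by (simp add: o_def)
    qed
    moreover have "\<forall>a\<in>A. dec (snd k0 a) i = snd k a"
      using decenc phiT_in0 i unfolding k0_def phiT_def by auto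
    ultimately show "\<exists>h. ua_hom ar (fst k0) (fst k) h \<and> (\<forall>a\<in>A. h (snd k0 a) = snd k a)" by blast
  qed
qed

definition key :: "('v \<Rightarrow> ((('f, nat) alg \<times> ('w \<Rightarrow> nat)) \<Rightarrow> nat)) \<Rightarrow> 'v set
   \<Rightarrow> (('f, nat) alg \<times> ('w \<Rightarrow> nat)) \<Rightarrow> (('f, nat) alg \<times> ('v \<Rightarrow> nat))" where
  "key \<tau> B k = (subalg (fst k) (\<lambda>b. \<tau> b k) B, restrict (\<lambda>b. \<tau> b k) B)"

definition ext :: "('v \<Rightarrow> ((('f, nat) alg \<times> ('w \<Rightarrow> nat)) \<Rightarrow> nat)) \<Rightarrow> 'v set \<Rightarrow> 'w set
   \<Rightarrow> ((('f, nat) alg \<times> ('v \<Rightarrow> nat)) \<Rightarrow> nat) \<Rightarrow> ((('f, nat) alg \<times> ('w \<Rightarrow> nat)) \<Rightarrow> nat)" where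
  "ext \<tau> B A x = (\<lambda>k\<in>Omega_idx ar U A. x (key \<tau> B k))"

lemma key_idx:
  assumes "\<forall>b\<in>B. \<tau> b \<in> Omega ar U A" "k \<in> Omega_idx ar U A"
  shows "key \<tau> B k \<in> Omega_idx ar U B" "(\<lambda>b. \<tau> b k) ` B \<subseteq> ua_carrier (fst k)"
proof -
  show s: "(\<lambda>b. \<tau> b k) ` B \<subseteq> ua_carrier (fst k)" using assms Omega_coord_in by blast
  show "key \<tau> B k \<in> Omega_idx ar U B" unfolding key_def using sub_idx(1)[OF idx_D(1)[OF assms(2)] s] .
qed

lemma ext_in:
  assumes tau: "\<forall>b\<in>B. \<tau> b \<in> Omega ar U A" and x: "x \<in> Omega ar U B"
  shows "ext \<tau> B A x \<in> Omega ar U A"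
  unfolding Omega_def
proof (intro CollectI conjI allI impI)
  show "ext \<tau> B A x \<in> (\<Pi>\<^sub>E k\<in>Omega_idx ar U A. ua_carrier (fst k))"
  proof -
    have "x (key \<tau> B k) \<in> ua_carrier (fst k)" if k: "k \<in> Omega_idx ar U A" for k
    proof -
      have "x (key \<tau> B k) \<in> ua_carrier (fst (key \<tau> B k))" using Omega_coord_in[OF x key_idx(1)[OF tau k]] .
      also have "\<dots> \<subseteq> ua_carrier (fst k)" unfolding key_def using sub_idx(3)[OF idx_D(1)[OF k] key_idx(2)[OF tau k]] by simp
      finally show ?thesis .
    qed
    then show ?thesis unfolding ext_def by auto
  qed
next
  fix S \<phi> T \<psi> h
  assume a: "(S, \<phi>) \<in> Omega_idx ar U A \<and> (T, \<psi>) \<in> Omega_idx ar U A \<and> ua_hom ar S T h \<and> (\<forall>a\<in>A. h (\<phi> a) = \<psi> a)"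
  have hb: "\<forall>b\<in>B. h (\<tau> b (S, \<phi>)) = \<tau> b (T, \<psi>)"
  proof
    fix b assume "b \<in> B"
    show "h (\<tau> b (S, \<phi>)) = \<tau> b (T, \<psi>)"
      using Omega_D(2)[OF bspec[OF tau \<open>b \<in> B\<close>], of S \<phi> T \<psi> h] a by blast
  qed
  have sS: "(\<lambda>b. \<tau> b (S, \<phi>)) ` B \<subseteq> ua_carrier S" using key_idx(2)[OF tau, of "(S,\<phi>)"] a by simp
  have sT: "(\<lambda>b. \<tau> b (T, \<psi>)) ` B \<subseteq> ua_carrier T" using key_idx(2)[OF tau, of "(T,\<psi>)"] a by simp
  have SU: "S \<in> U" using a idx_D(1)[of "(S,\<phi>)" A] by simp
  have TU: "T \<in> U" using a idx_D(1)[of "(T,\<psi>)" A] by simp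
  have hom: "ua_hom ar (subalg S (\<lambda>b. \<tau> b (S, \<phi>)) B) (subalg T (\<lambda>b. \<tau> b (T, \<psi>)) B) h"
    unfolding ua_hom_def subalg_simps
  proof (intro conjI allI impI)
    show "h \<in> ua_generated ar S ((\<lambda>b. \<tau> b (S, \<phi>)) ` B) \<rightarrow> ua_generated ar T ((\<lambda>b. \<tau> b (T, \<psi>)) ` B)"
    proof
      fix y assume "y \<in> ua_generated ar S ((\<lambda>b. \<tau> b (S, \<phi>)) ` B)"
      then obtain t where t: "wf_trm ar t" "trm_vars t \<subseteq> B" "y = eval_trm (ua_ops S) (\<lambda>b. \<tau> b (S, \<phi>)) t"
        unfolding sub_idx(2)[OF SU sS] evals_def by blast
      have "h y = eval_trm (ua_ops T) (\<lambda>b. h (\<tau> b (S, \<phi>))) t"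
      proof (rule hom_eval[where ar=ar and S=S and T=T and h=h and t=t and \<sigma>="\<lambda>b. \<tau> b (S, \<phi>)", unfolded t(3)[symmetric]])
        show "ua_hom ar S T h" using a by blast
        show "is_alg ar S" using U_alg[OF SU] .
        show "wf_trm ar t" using t(1) .
        show "\<forall>x\<in>trm_vars t. \<tau> x (S, \<phi>) \<in> ua_carrier S" using t(2) sS by blast
      qed
      also have "\<dots> = eval_trm (ua_ops T) (\<lambda>b. \<tau> b (T, \<psi>)) t"
        using hb t(2) by (intro eval_cong) auto
      finally show "h y \<in> ua_generated ar T ((\<lambda>b. \<tau> b (T, \<psi>)) ` B)"
        unfolding sub_idx(2)[OF TU sT] evals_def using t by blast
    qed
  next
    fix f xs assume "set xs \<subseteq> ua_generated ar S ((\<lambda>b. \<tau> b (S, \<phi>)) ` B) \<and> length xs = ar f"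
    then show "h (ua_ops S f xs) = ua_ops T f (map h xs)"
      using a sub_idx(3)[OF SU sS] unfolding ua_hom_def by blast
  qed
  have "h (x (key \<tau> B (S, \<phi>))) = x (key \<tau> B (T, \<psi>))"
  proof -
    have hb': "\<forall>b\<in>B. h (restrict (\<lambda>b. \<tau> b (S,\<phi>)) B b) = restrict (\<lambda>b. \<tau> b (T,\<psi>)) B b" using hb by simp
    show ?thesis
      using Omega_D(2)[OF x, of "subalg S (\<lambda>b. \<tau> b (S,\<phi>)) B" "restrict (\<lambda>b. \<tau> b (S,\<phi>)) B"
          "subalg T (\<lambda>b. \<tau> b (T,\<psi>)) B" "restrict (\<lambda>b. \<tau> b (T,\<psi>)) B" h]
        key_idx(1)[OF tau, of "(S,\<phi>)"] key_idx(1)[OF tau, of "(T,\<psi>)"] a hom hb'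
      unfolding key_def fst_conv snd_conv by blast
  qed
  then show "h (ext \<tau> B A x (S, \<phi>)) = ext \<tau> B A x (T, \<psi>)"
    unfolding ext_def using a by simp
qed

lemma ext_hom:
  assumes tau: "\<forall>b\<in>B. \<tau> b \<in> Omega ar U A"
  shows "ua_hom ar (Omega_alg ar U B) (Omega_alg ar U A) (ext \<tau> B A)"
  unfolding ua_hom_def Omega_alg_simps
proof (intro conjI allI impI)
  show "ext \<tau> B A \<in> Omega ar U B \<rightarrow> Omega ar U A" using ext_in[OF tau] by blast
next
  fix f xs assume a: "set xs \<subseteq> Omega ar U B \<and> length xs = ar f"
  show "ext \<tau> B A (Omega_op ar U B f xs) = Omega_op ar U A f (map (ext \<tau> B A) xs)"
  proof
    fix k show "ext \<tau> B A (Omega_op ar U B f xs) k = Omega_op ar U A f (map (ext \<tau> B A) xs) k"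
    proof (cases "k \<in> Omega_idx ar U A")
      case True
      have m: "map (\<lambda>y. y k) (map (ext \<tau> B A) xs) = map (\<lambda>x. x (key \<tau> B k)) xs"
        using True unfolding ext_def by simp
      have "ext \<tau> B A (Omega_op ar U B f xs) k = Omega_op ar U B f xs (key \<tau> B k)" using True by (simp add: ext_def)
      also have "\<dots> = ua_ops (fst (key \<tau> B k)) f (map (\<lambda>x. x (key \<tau> B k)) xs)"
        by (rule Omega_op_coord[OF key_idx(1)[OF tau True]])
      also have "\<dots> = ua_ops (fst k) f (map (\<lambda>y. y k) (map (ext \<tau> B A) xs))"
        unfolding m by (simp only: key_def fst_conv subalg_simps)
      also have "\<dots> = Omega_op ar U A f (map (ext \<tau> B A) xs) k"
        by (rule Omega_op_coord[OF True, symmetric])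
      finally show ?thesis .
    next
      case False then show ?thesis by (simp add: ext_def Omega_op_def)
    qed
  qed
qed

lemma ext_gen:
  assumes tau: "\<forall>b\<in>B. \<tau> b \<in> Omega ar U A" and b: "b \<in> B"
  shows "ext \<tau> B A (Omega_gen ar U B b) = \<tau> b"
proof (rule HOL.ext)
  fix k show "ext \<tau> B A (Omega_gen ar U B b) k = \<tau> b k"
  proof (cases "k \<in> Omega_idx ar U A")
    case True
    have "ext \<tau> B A (Omega_gen ar U B b) k = Omega_gen ar U B b (key \<tau> B k)"
      using True by (simp only: ext_def restrict_apply' )
    also have "\<dots> = snd (key \<tau> B k) b"
      using key_idx(1)[OF tau True] by (simp only: Omega_gen_def restrict_apply')
    also have "\<dots> = \<tau> b k" using b by (simp only: key_def snd_conv restrict_apply')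
    finally show ?thesis .
  next
    case False
    have "\<tau> b \<in> PiE (Omega_idx ar U A) (\<lambda>k. ua_carrier (fst k))" using Omega_D(1) tau b by blast
    then have "\<tau> b k = undefined" using False by (rule PiE_arb)
    moreover have "ext \<tau> B A (Omega_gen ar U B b) k = undefined" using False unfolding ext_def by simp
    ultimately show ?thesis by simp
  qed
qed

end



lemma cont_dep:
  assumes J: "finite J" "J \<subseteq> I"
    and FY: "\<And>x. x \<in> S \<inter> PiE I C \<Longrightarrow> F x \<in> Y"
    and Fdep: "\<And>x y. x \<in> S \<inter> PiE I C \<Longrightarrow> y \<in> S \<inter> PiE I C \<Longrightarrow> (\<forall>j\<in>J. x j = y j) \<Longrightarrow> F x = F y"
  shows "continuous_map (subtopology (product_topology (\<lambda>k. discrete_topology (C k)) I) S) (discrete_topology Y) F"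
  unfolding continuous_map_def
proof (intro conjI allI impI)
  show "F \<in> topspace (subtopology (product_topology (\<lambda>k. discrete_topology (C k)) I) S) \<rightarrow> topspace (discrete_topology Y)"
    using FY by auto
next
  fix V assume "openin (discrete_topology Y) V"
  define Ob where "Ob = {y \<in> PiE I C. \<exists>x\<in>S \<inter> PiE I C. (\<forall>j\<in>J. x j = y j) \<and> F x \<in> V}"
  have "openin (product_topology (\<lambda>k. discrete_topology (C k)) I) Ob"
    unfolding openin_product_topology_alt
  proof
    fix y assume y: "y \<in> Ob"
    define W where "W i = (if i \<in> J then {y i} else C i)" for i
    have yC: "y \<in> PiE I C" using y Ob_def by blast
    show "\<exists>W. finite {i \<in> I. W i \<noteq> topspace (discrete_topology (C i))} \<and>
             (\<forall>i\<in>I. openin (discrete_topology (C i)) (W i)) \<and> y \<in> Pi\<^sub>E I W \<and> Pi\<^sub>E I W \<subseteq> Ob"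
    proof (intro exI[of _ W] conjI)
      show "finite {i \<in> I. W i \<noteq> topspace (discrete_topology (C i))}"
        by (rule finite_subset[OF _ J(1)]) (auto simp: W_def)
      show "\<forall>i\<in>I. openin (discrete_topology (C i)) (W i)"
        using yC by (auto simp: W_def PiE_iff)
      show "y \<in> Pi\<^sub>E I W" using yC by (auto simp: W_def PiE_iff)
      show "Pi\<^sub>E I W \<subseteq> Ob"
      proof
        fix z assume z: "z \<in> Pi\<^sub>E I W"
        have zC: "z \<in> PiE I C"
          using z yC J(2) by (auto simp: W_def PiE_iff split: if_splits)
        have zJ: "\<forall>j\<in>J. z j = y j"
        proof
          fix j assume "j \<in> J"
          then have "j \<in> I" "z j \<in> W j" using z J(2) by (auto simp: PiE_iff)
          then show "z j = y j" using \<open>j \<in> J\<close> by (simp add: W_def)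
        qed
        obtain x where "x \<in> S \<inter> PiE I C" "\<forall>j\<in>J. x j = y j" "F x \<in> V" using y Ob_def by blast
        then show "z \<in> Ob" unfolding Ob_def using zC zJ by auto
      qed
    qed
  qed
  moreover have "{x \<in> topspace (subtopology (product_topology (\<lambda>k. discrete_topology (C k)) I) S). F x \<in> V} = Ob \<inter> S"
  proof (intro equalityI subsetI)
    fix x assume "x \<in> {x \<in> topspace (subtopology (product_topology (\<lambda>k. discrete_topology (C k)) I) S). F x \<in> V}"
    then show "x \<in> Ob \<inter> S" unfolding Ob_def by auto
  next
    fix x assume x: "x \<in> Ob \<inter> S"
    then obtain x' where "x' \<in> S \<inter> PiE I C" "\<forall>j\<in>J. x' j = x j" "F x' \<in> V" unfolding Ob_def by blast
    moreover have "x \<in> S \<inter> PiE I C" using x unfolding Ob_def by blast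
    ultimately have "F x \<in> V" using Fdep by metis
    then show "x \<in> {x \<in> topspace (subtopology (product_topology (\<lambda>k. discrete_topology (C k)) I) S). F x \<in> V}"
      using x unfolding Ob_def by auto
  qed
  ultimately show "openin (subtopology (product_topology (\<lambda>k. discrete_topology (C k)) I) S)
       {x \<in> topspace (subtopology (product_topology (\<lambda>k. discrete_topology (C k)) I) S). F x \<in> V}"
    unfolding openin_subtopology by blast
qed

context PV begin

abbreviation PT where "PT A \<equiv> product_topology (\<lambda>k. discrete_topology (ua_carrier (fst k))) (Omega_idx ar U A)"

lemma Omega_sub_top: "Omega ar U A \<subseteq> PiE (Omega_idx ar U A) (\<lambda>k. ua_carrier (fst k))"
  using Omega_D(1) by blast

lemma topspace_OT [simp]: "topspace (Omega_top ar U A) = Omega ar U A"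
  unfolding Omega_top_def using Omega_sub_top by auto

lemma cont_from_OT:
  assumes "finite J" "J \<subseteq> Omega_idx ar U A"
    "\<And>x. x \<in> Omega ar U A \<Longrightarrow> F x \<in> Y"
    "\<And>x y. x \<in> Omega ar U A \<Longrightarrow> y \<in> Omega ar U A \<Longrightarrow> (\<forall>j\<in>J. x j = y j) \<Longrightarrow> F x = F y"
  shows "continuous_map (Omega_top ar U A) (discrete_topology Y) F"
  unfolding Omega_top_def
  by (rule cont_dep[OF assms(1,2)]) (use assms(3,4) in blast)+

lemma cont_into_OT:
  assumes "\<And>x. x \<in> topspace X \<Longrightarrow> g x \<in> Omega ar U A"
    "\<And>k. k \<in> Omega_idx ar U A \<Longrightarrow> continuous_map X (discrete_topology (ua_carrier (fst k))) (\<lambda>x. g x k)"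
  shows "continuous_map X (Omega_top ar U A) g"
  unfolding Omega_top_def continuous_map_in_subtopology
proof
  show "continuous_map X (PT A) g"
    unfolding continuous_map_componentwise
    using assms Omega_sub_top by (force simp: PiE_def)
  show "g \<in> topspace X \<rightarrow> Omega ar U A" using assms(1) by blast
qed

lemma Omega_closed: "closedin (PT A) (Omega ar U A)"
proof -
  define Z where "Z = (\<lambda>(S, \<phi>, T, \<psi>, h). {x \<in> topspace (PT A). h (x (S, \<phi>)) = x (T, \<psi>)})"
  define Cs where "Cs = {(S, \<phi>, T, \<psi>, h). (S, \<phi>) \<in> Omega_idx ar U A \<and> (T, \<psi>) \<in> Omega_idx ar U A \<and>
        ua_hom ar S T h \<and> (\<forall>a\<in>A. h (\<phi> a) = \<psi> a)}"
  have eq: "Omega ar U A = \<Inter>(insert (topspace (PT A)) (Z ` Cs))"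
    unfolding Omega_def Z_def Cs_def by auto
  have closedZ: "closedin (PT A) (Z c)" if c: "c \<in> Cs" for c
  proof -
    obtain S \<phi> T \<psi> h where cc: "c = (S, \<phi>, T, \<psi>, h)" by (cases c) auto
    have k: "(S, \<phi>) \<in> Omega_idx ar U A" "(T, \<psi>) \<in> Omega_idx ar U A" using c cc Cs_def by auto
    have "continuous_map (subtopology (PT A) UNIV) (discrete_topology UNIV) (\<lambda>x. h (x (S, \<phi>)) = x (T, \<psi>))"
      by (rule cont_dep[of "{(S, \<phi>), (T, \<psi>)}"]) (use k in auto)
    then have "closedin (PT A) {x \<in> topspace (PT A). (h (x (S, \<phi>)) = x (T, \<psi>)) \<in> {True}}"
      by (intro closedin_continuous_map_preimage) auto
    then show ?thesis unfolding cc Z_def by simp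
  qed
  have ct: "closedin (PT A) (topspace (PT A))" by (rule closedin_topspace)
  show ?thesis unfolding eq by (intro closedin_Inter) (use ct closedZ in blast)+
qed

lemma OT_compact: "compact_space (Omega_top ar U A)"
proof -
  have "compact_space (PT A)"
    unfolding compact_space_product_topology
    using U_fin idx_D(1) compact_space_discrete_topology by blast
  then show ?thesis unfolding Omega_top_def
    using closedin_compact_space Omega_closed compact_space_subtopology by blast
qed

lemma OT_Hausdorff: "Hausdorff_space (Omega_top ar U A)"
  unfolding Omega_top_def
  by (intro Hausdorff_space_subtopology) (simp add: Hausdorff_space_product_topology)

lemma ext_cont:
  assumes tau: "\<forall>b\<in>B. \<tau> b \<in> Omega ar U A"
  shows "cont_hom_Omega ar U B A (ext \<tau> B A)"
  unfolding cont_hom_Omega_def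
proof
  show "ua_hom ar (Omega_alg ar U B) (Omega_alg ar U A) (ext \<tau> B A)" using ext_hom[OF tau] .
  show "continuous_map (Omega_top ar U B) (Omega_top ar U A) (ext \<tau> B A)"
  proof (rule cont_into_OT)
    show "\<And>x. x \<in> topspace (Omega_top ar U B) \<Longrightarrow> ext \<tau> B A x \<in> Omega ar U A"
      using ext_in[OF tau] by simp
    fix k assume k: "k \<in> Omega_idx ar U A"
    show "continuous_map (Omega_top ar U B) (discrete_topology (ua_carrier (fst k))) (\<lambda>x. ext \<tau> B A x k)"
    proof (rule cont_from_OT[of "{key \<tau> B k}"])
      show "{key \<tau> B k} \<subseteq> Omega_idx ar U B" using key_idx(1)[OF tau k] by simp
      show "\<And>x. x \<in> Omega ar U B \<Longrightarrow> ext \<tau> B A x k \<in> ua_carrier (fst k)"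
        using ext_in[OF tau] Omega_coord_in k by blast
      show "\<And>x y. x \<in> Omega ar U B \<Longrightarrow> y \<in> Omega ar U B \<Longrightarrow> \<forall>j\<in>{key \<tau> B k}. x j = y j \<Longrightarrow> ext \<tau> B A x k = ext \<tau> B A y k"
        using k by (simp add: ext_def)
    qed simp
  qed
qed

lemma poly_cont:
  assumes "wf_trm ar t" "\<forall>i. \<sigma> i \<in> Omega ar U A"
  shows "continuous_map (Omega_top ar U A) (Omega_top ar U A) (\<lambda>x. eval_trm (Omega_op ar U A) (\<sigma>(0 := x)) t)"
proof (rule cont_into_OT)
  have r: "\<forall>x\<in>trm_vars t. (\<sigma>(0 := y)) x \<in> Omega ar U A" if "y \<in> Omega ar U A" for y
    using assms(2) that by auto
  have "eval_trm (Omega_op ar U A) (\<sigma>(0 := x)) t \<in> Omega ar U A" if "x \<in> Omega ar U A" for x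
    using eval_Omega[OF assms(1) r[OF that]] by blast
  then show "\<And>x. x \<in> topspace (Omega_top ar U A) \<Longrightarrow> eval_trm (Omega_op ar U A) (\<sigma>(0 := x)) t \<in> Omega ar U A"
    by (simp only: topspace_OT)
  fix k assume k: "k \<in> Omega_idx ar U A"
  show "continuous_map (Omega_top ar U A) (discrete_topology (ua_carrier (fst k))) (\<lambda>x. eval_trm (Omega_op ar U A) (\<sigma>(0 := x)) t k)"
  proof (rule cont_from_OT[of "{k}"])
    show "\<And>x. x \<in> Omega ar U A \<Longrightarrow> eval_trm (Omega_op ar U A) (\<sigma>(0 := x)) t k \<in> ua_carrier (fst k)"
      using eval_Omega[OF assms(1) r] Omega_coord_in k by blast
    fix x y assume xy: "x \<in> Omega ar U A" "y \<in> Omega ar U A" "\<forall>j\<in>{k}. x j = y j"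
    have "eval_trm (Omega_op ar U A) (\<sigma>(0 := x)) t k = eval_trm (ua_ops (fst k)) (\<lambda>i. (\<sigma>(0 := x)) i k) t"
      using eval_Omega[OF assms(1) r[OF xy(1)]] k by blast
    also have "\<dots> = eval_trm (ua_ops (fst k)) (\<lambda>i. (\<sigma>(0 := y)) i k) t"
      using xy(3) by (intro eval_cong) auto
    also have "\<dots> = eval_trm (Omega_op ar U A) (\<sigma>(0 := y)) t k"
      using eval_Omega[OF assms(1) r[OF xy(2)]] k by metis
    finally show "eval_trm (Omega_op ar U A) (\<sigma>(0 := x)) t k = eval_trm (Omega_op ar U A) (\<sigma>(0 := y)) t k" .
  qed (use k in auto)
qed

end



fun subst :: "('v \<Rightarrow> ('f, 'w) trm) \<Rightarrow> ('f, 'v) trm \<Rightarrow> ('f, 'w) trm" where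
  "subst s (Var x) = s x"
| "subst s (App f ts) = App f (map (subst s) ts)"

lemma eval_subst: "eval_trm F \<rho> (subst s t) = eval_trm F (\<lambda>x. eval_trm F \<rho> (s x)) t"
proof (induction t)
  case (App f ts)
  have "map (eval_trm F \<rho>) (map (subst s) ts) = map (eval_trm F (\<lambda>x. eval_trm F \<rho> (s x))) ts"
    using App by simp
  then show ?case by (simp only: subst.simps eval_trm.simps)
qed simp

lemma wf_subst: "wf_trm ar t \<Longrightarrow> (\<forall>x\<in>trm_vars t. wf_trm ar (s x)) \<Longrightarrow> wf_trm ar (subst s t)"
  by (induction t) (auto simp: list_all_iff)

lemma vars_subst: "trm_vars (subst s t) = (\<Union>x\<in>trm_vars t. trm_vars (s x))"
  by (induction t) auto

locale PVS = PV ar U for ar :: "'f \<Rightarrow> nat" and U +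
  fixes \<Sigma> :: "(('f, 'v) trm \<times> ('f, 'v) trm) set"
  assumes wfS: "\<forall>e\<in>\<Sigma>. wf_trm ar (fst e) \<and> wf_trm ar (snd e)"
begin

abbreviation PP where "PP A \<equiv> prod_topology (Omega_top ar U A) (Omega_top ar U A)"

lemma Sigma0_sub: "Sigma0 ar U \<Sigma> A \<subseteq> Omega ar U A \<times> Omega ar U A"
proof
  fix z assume "z \<in> Sigma0 ar U \<Sigma> A"
  then obtain e p q g t \<sigma> where z: "z = (eval_trm (Omega_op ar U A) (\<sigma>(0 := g p)) t, eval_trm (Omega_op ar U A) (\<sigma>(0 := g q)) t)"
    and e: "e \<in> \<Sigma>" and pq: "(p = Omega_trm ar U (id_vars e) (fst e) \<and> q = Omega_trm ar U (id_vars e) (snd e)) \<or>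
           (p = Omega_trm ar U (id_vars e) (snd e) \<and> q = Omega_trm ar U (id_vars e) (fst e))"
    and g: "cont_hom_Omega ar U (id_vars e) A g" and t: "wf_trm ar (t :: ('f, nat) trm)" and s: "\<forall>i. \<sigma> i \<in> Omega ar U A"
    unfolding Sigma0_def by blast
  have "Omega_trm ar U (id_vars e) (fst e) \<in> Omega ar U (id_vars e)"
    using wfS e by (intro Omega_trm(1)) (auto simp: id_vars_def)
  moreover have "Omega_trm ar U (id_vars e) (snd e) \<in> Omega ar U (id_vars e)"
    using wfS e by (intro Omega_trm(1)) (auto simp: id_vars_def)
  ultimately have "p \<in> Omega ar U (id_vars e)" "q \<in> Omega ar U (id_vars e)" using pq by auto
  then have "g p \<in> Omega ar U A" "g q \<in> Omega ar U A"
    using g unfolding cont_hom_Omega_def ua_hom_def by auto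
  then have "\<forall>x\<in>trm_vars t. (\<sigma>(0 := g p)) x \<in> Omega ar U A" "\<forall>x\<in>trm_vars t. (\<sigma>(0 := g q)) x \<in> Omega ar U A"
    using s by auto
  then show "z \<in> Omega ar U A \<times> Omega ar U A"
    unfolding z using eval_Omega[OF t] by blast
qed

definition fam where "fam A = {R. Sigma0 ar U \<Sigma> A \<subseteq> R \<and> trans R \<and> closedin (PP A) R}"

lemma fam_top: "Omega ar U A \<times> Omega ar U A \<in> fam A"
  unfolding fam_def using Sigma0_sub closedin_topspace[of "PP A"] by (auto simp: trans_def)

lemma ST_eq: "Sigma_tilde ar U \<Sigma> A = \<Inter>(fam A)"
  unfolding Sigma_tilde_def fam_def ..

lemma ST_props:
  "Sigma0 ar U \<Sigma> A \<subseteq> Sigma_tilde ar U \<Sigma> A"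
  "trans (Sigma_tilde ar U \<Sigma> A)"
  "closedin (PP A) (Sigma_tilde ar U \<Sigma> A)"
  "Sigma_tilde ar U \<Sigma> A \<subseteq> Omega ar U A \<times> Omega ar U A"
  "R \<in> fam A \<Longrightarrow> Sigma_tilde ar U \<Sigma> A \<subseteq> R"
proof -
  show "Sigma0 ar U \<Sigma> A \<subseteq> Sigma_tilde ar U \<Sigma> A" unfolding ST_eq fam_def by blast
  show "trans (Sigma_tilde ar U \<Sigma> A)" unfolding ST_eq fam_def trans_def by blast
  show "closedin (PP A) (Sigma_tilde ar U \<Sigma> A)" unfolding ST_eq
    by (rule closedin_Inter) (use fam_top in \<open>auto simp: fam_def\<close>)
  show "Sigma_tilde ar U \<Sigma> A \<subseteq> Omega ar U A \<times> Omega ar U A" unfolding ST_eq using fam_top by blast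
  show "R \<in> fam A \<Longrightarrow> Sigma_tilde ar U \<Sigma> A \<subseteq> R" unfolding ST_eq by blast
qed

lemma Sigma0_sym: "(x, y) \<in> Sigma0 ar U \<Sigma> A \<Longrightarrow> (y, x) \<in> Sigma0 ar U \<Sigma> A"
  unfolding Sigma0_def by blast

lemma ST_sym: "(x, y) \<in> Sigma_tilde ar U \<Sigma> A \<Longrightarrow> (y, x) \<in> Sigma_tilde ar U \<Sigma> A"
proof -
  let ?S = "Sigma_tilde ar U \<Sigma> A"
  have "converse ?S \<in> fam A"
    unfolding fam_def
  proof (intro CollectI conjI)
    show "Sigma0 ar U \<Sigma> A \<subseteq> converse ?S"
    proof
      fix z assume z: "z \<in> Sigma0 ar U \<Sigma> A"
      obtain a b where ab: "z = (a, b)" by (cases z)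
      have "(b, a) \<in> Sigma0 ar U \<Sigma> A" using z ab Sigma0_sym by blast
      then have "(b, a) \<in> ?S" using ST_props(1)[of A] by blast
      then show "z \<in> converse ?S" using ab by simp
    qed
    show "trans (converse ?S)" using ST_props(2) by simp
    have c: "continuous_map (PP A) (PP A) (\<lambda>z. (snd z, fst z))"
      by (intro continuous_map_pairedI continuous_map_fst continuous_map_snd)
    have "closedin (PP A) {z \<in> topspace (PP A). (snd z, fst z) \<in> ?S}"
      by (rule closedin_continuous_map_preimage[OF c ST_props(3)])
    moreover have "{z \<in> topspace (PP A). (snd z, fst z) \<in> ?S} = converse ?S"
      using ST_props(4) by auto
    ultimately show "closedin (PP A) (converse ?S)" by simp
  qed
  then have "?S \<subseteq> converse ?S" by (rule ST_props(5))
  then show "(x, y) \<in> ?S \<Longrightarrow> (y, x) \<in> ?S" by blast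
qed

lemma ST_poly:
  assumes t: "wf_trm ar (t :: ('f, nat) trm)" and s: "\<forall>i. \<sigma> i \<in> Omega ar U A" and xy: "(x, y) \<in> Sigma_tilde ar U \<Sigma> A"
  shows "(eval_trm (Omega_op ar U A) (\<sigma>(0 := x)) t, eval_trm (Omega_op ar U A) (\<sigma>(0 := y)) t) \<in> Sigma_tilde ar U \<Sigma> A"
proof -
  let ?S = "Sigma_tilde ar U \<Sigma> A"
  define p where "p x = eval_trm (Omega_op ar U A) (\<sigma>(0 := x)) t" for x
  define Rp where "Rp = {z \<in> Omega ar U A \<times> Omega ar U A. (p (fst z), p (snd z)) \<in> ?S}"
  have "Rp \<in> fam A"
    unfolding fam_def
  proof (intro CollectI conjI)
    show "Sigma0 ar U \<Sigma> A \<subseteq> Rp"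
    proof
      fix z assume z0: "z \<in> Sigma0 ar U \<Sigma> A"
      then obtain e P Q g t' \<sigma>' where z: "z = (eval_trm (Omega_op ar U A) (\<sigma>'(0 := g P)) t', eval_trm (Omega_op ar U A) (\<sigma>'(0 := g Q)) t')"
        and e: "e \<in> \<Sigma>" and pq: "(P = Omega_trm ar U (id_vars e) (fst e) \<and> Q = Omega_trm ar U (id_vars e) (snd e)) \<or>
               (P = Omega_trm ar U (id_vars e) (snd e) \<and> Q = Omega_trm ar U (id_vars e) (fst e))"
        and g: "cont_hom_Omega ar U (id_vars e) A g" and t': "wf_trm ar (t' :: ('f, nat) trm)" and s': "\<forall>i. \<sigma>' i \<in> Omega ar U A"
        unfolding Sigma0_def by blast
      define t'' where "t'' = subst (\<lambda>i. if i = 0 then subst (\<lambda>j. Var (2 * j)) t' else Var (2 * i + 1)) t"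
      define \<sigma>'' where "\<sigma>'' n = (if even n then \<sigma>' (n div 2) else \<sigma> (n div 2))" for n
      have w1: "wf_trm ar (subst (\<lambda>j. Var (2 * j)) t')" by (rule wf_subst[OF t']) simp
      have wf'': "wf_trm ar t''" unfolding t''_def
        by (rule wf_subst[OF t]) (simp add: w1)
      have s'': "\<forall>i. \<sigma>'' i \<in> Omega ar U A" using s s' by (simp add: \<sigma>''_def)
      have key: "eval_trm (Omega_op ar U A) (\<sigma>''(0 := w)) t'' = p (eval_trm (Omega_op ar U A) (\<sigma>'(0 := w)) t')" for w
      proof -
        have a: "(\<lambda>j. (\<sigma>''(0 := w)) (2 * j)) = \<sigma>'(0 := w)" by (auto simp: \<sigma>''_def)
        have b: "(\<lambda>i. eval_trm (Omega_op ar U A) (\<sigma>''(0 := w)) (if i = 0 then subst (\<lambda>j. Var (2 * j)) t' else Var (2 * i + 1)))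
            = \<sigma>(0 := eval_trm (Omega_op ar U A) (\<sigma>'(0 := w)) t')"
        proof (rule HOL.ext)
          fix i show "eval_trm (Omega_op ar U A) (\<sigma>''(0 := w)) (if i = 0 then subst (\<lambda>j. Var (2 * j)) t' else Var (2 * i + 1))
            = (\<sigma>(0 := eval_trm (Omega_op ar U A) (\<sigma>'(0 := w)) t')) i"
          proof (cases "i = 0")
            case True
            have "eval_trm (Omega_op ar U A) (\<sigma>''(0 := w)) (subst (\<lambda>j. Var (2 * j)) t') =
               eval_trm (Omega_op ar U A) (\<lambda>j. eval_trm (Omega_op ar U A) (\<sigma>''(0 := w)) (Var (2 * j))) t'"
              by (rule eval_subst)
            also have "(\<lambda>j. eval_trm (Omega_op ar U A) (\<sigma>''(0 := w)) (Var (2 * j))) = \<sigma>'(0 := w)"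
              by (rule HOL.ext) (simp add: \<sigma>''_def)
            finally have X: "eval_trm (Omega_op ar U A) (\<sigma>''(0 := w)) (subst (\<lambda>j. Var (2 * j)) t') = eval_trm (Omega_op ar U A) (\<sigma>'(0 := w)) t'" .
            show ?thesis by (simp only: True if_True fun_upd_same simp_thms X)
          next
            case False then show ?thesis by (simp add: \<sigma>''_def)
          qed
        qed
        have "eval_trm (Omega_op ar U A) (\<sigma>''(0 := w)) t'' = eval_trm (Omega_op ar U A) (\<lambda>i. eval_trm (Omega_op ar U A) (\<sigma>''(0 := w)) (if i = 0 then subst (\<lambda>j. Var (2 * j)) t' else Var (2 * i + 1))) t"
          unfolding t''_def by (rule eval_subst)
        also have "\<dots> = eval_trm (Omega_op ar U A) (\<sigma>(0 := eval_trm (Omega_op ar U A) (\<sigma>'(0 := w)) t')) t"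
          by (intro eval_cong ballI) (rule fun_cong[OF b])
        finally show ?thesis unfolding p_def .
      qed
      have "(eval_trm (Omega_op ar U A) (\<sigma>''(0 := g P)) t'', eval_trm (Omega_op ar U A) (\<sigma>''(0 := g Q)) t'') \<in> Sigma0 ar U \<Sigma> A"
        unfolding Sigma0_def using e pq g wf'' s'' by blast
      then have "(p (fst z), p (snd z)) \<in> ?S" using ST_props(1) unfolding z key by auto
      moreover have "z \<in> Omega ar U A \<times> Omega ar U A" using z0 Sigma0_sub by blast
      ultimately show "z \<in> Rp" unfolding Rp_def by blast
    qed
    show "trans Rp" unfolding trans_def
    proof (intro allI impI)
      fix a b c assume ab: "(a, b) \<in> Rp" and bc: "(b, c) \<in> Rp"
      have "(p a, p b) \<in> ?S" "(p b, p c) \<in> ?S" "a \<in> Omega ar U A" "c \<in> Omega ar U A"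
        using ab bc unfolding Rp_def by auto
      then have "(p a, p c) \<in> ?S" using ST_props(2)[of A] by (meson transD)
      then show "(a, c) \<in> Rp" using \<open>a \<in> Omega ar U A\<close> \<open>c \<in> Omega ar U A\<close> unfolding Rp_def by simp
    qed
    have pc: "continuous_map (Omega_top ar U A) (Omega_top ar U A) p"
      unfolding p_def using poly_cont[OF t s] .
    have c1: "continuous_map (PP A) (Omega_top ar U A) (\<lambda>z. p (fst z))"
      using continuous_map_compose[OF continuous_map_fst pc] by (simp add: o_def)
    have c2: "continuous_map (PP A) (Omega_top ar U A) (\<lambda>z. p (snd z))"
      using continuous_map_compose[OF continuous_map_snd pc] by (simp add: o_def)
    have c: "continuous_map (PP A) (PP A) (\<lambda>z. (p (fst z), p (snd z)))"
      by (rule continuous_map_pairedI[OF c1 c2])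
    have "closedin (PP A) {z \<in> topspace (PP A). (p (fst z), p (snd z)) \<in> ?S}"
      by (rule closedin_continuous_map_preimage[OF c ST_props(3)])
    then show "closedin (PP A) Rp" unfolding Rp_def by simp
  qed
  then have "?S \<subseteq> Rp" by (rule ST_props(5))
  then have "(x, y) \<in> Rp" using xy by blast
  then have "(p x, p y) \<in> ?S" unfolding Rp_def by simp
  then show ?thesis unfolding p_def .
qed

definition E :: "'w set \<Rightarrow> ((('f, nat) alg \<times> ('w \<Rightarrow> nat)) \<Rightarrow> nat) \<Rightarrow> ((('f, nat) alg \<times> ('w \<Rightarrow> nat)) \<Rightarrow> nat) \<Rightarrow> bool" where
  "E A x y \<longleftrightarrow> x = y \<or> (x, y) \<in> Sigma_tilde ar U \<Sigma> A"

lemma E_refl: "E A x x" unfolding E_def by simp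
lemma E_sym: "E A x y \<Longrightarrow> E A y x" unfolding E_def using ST_sym[of x y A] by auto
lemma E_trans: "E A x y \<Longrightarrow> E A y z \<Longrightarrow> E A x z"
  unfolding E_def using ST_props(2)[of A] by (meson transD)
lemma E_Omega: "E A x y \<Longrightarrow> x \<in> Omega ar U A \<Longrightarrow> y \<in> Omega ar U A"
  unfolding E_def using ST_props(4)[of A] by (auto simp: subset_iff)

lemma E_poly:
  assumes "wf_trm ar (t :: ('f, nat) trm)" "\<forall>i. \<sigma> i \<in> Omega ar U A" "E A x y"
  shows "E A (eval_trm (Omega_op ar U A) (\<sigma>(0 := x)) t) (eval_trm (Omega_op ar U A) (\<sigma>(0 := y)) t)"
  using assms ST_poly[of t \<sigma> A x y] unfolding E_def by auto

lemma E_op1: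
  assumes "set pre \<subseteq> Omega ar U A" "set post \<subseteq> Omega ar U A" "x \<in> Omega ar U A"
    "length pre + Suc (length post) = ar f" "E A x y"
  shows "E A (Omega_op ar U A f (pre @ x # post)) (Omega_op ar U A f (pre @ y # post))"
proof -
  define L where "L = pre @ x # post"
  define n where "n = length L"
  define t :: "('f, nat) trm" where "t = App f (map (\<lambda>i. if i = length pre then Var 0 else Var (Suc i)) [0..<n])"
  define \<sigma> where "\<sigma> i = (if i = 0 \<or> n < i then x else L ! (i - 1))" for i
  have L: "set L \<subseteq> Omega ar U A" using assms(1-3) unfolding L_def by simp
  have s: "\<forall>i. \<sigma> i \<in> Omega ar U A"
  proof
    fix i show "\<sigma> i \<in> Omega ar U A"
    proof (cases "i = 0 \<or> n < i")
      case True then show ?thesis using assms(3) by (simp add: \<sigma>_def)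
    next
      case False
      then have "i - 1 < length L" unfolding n_def by (cases i) auto
      then have "L ! (i - 1) \<in> set L" by (rule nth_mem)
      then show ?thesis using False L by (auto simp: \<sigma>_def)
    qed
  qed
  have wt: "wf_trm ar t" unfolding t_def n_def L_def using assms(4) by (simp add: list_all_iff)
  have ev: "eval_trm (Omega_op ar U A) (\<sigma>(0 := z)) t = Omega_op ar U A f (pre @ z # post)" for z
  proof -
    have "map (eval_trm (Omega_op ar U A) (\<sigma>(0 := z))) (map (\<lambda>i. if i = length pre then Var 0 else Var (Suc i)) [0..<n])
        = pre @ z # post"
    proof (rule nth_equalityI)
      show "length (map (eval_trm (Omega_op ar U A) (\<sigma>(0 := z))) (map (\<lambda>i. if i = length pre then Var 0 else Var (Suc i)) [0..<n])) = length (pre @ z # post)"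
        by (simp add: n_def L_def)
      fix i assume "i < length (map (eval_trm (Omega_op ar U A) (\<sigma>(0 := z))) (map (\<lambda>i. if i = length pre then Var 0 else Var (Suc i)) [0..<n]))"
      then have i: "i < n" by simp
      have pz: "pre @ z # post = L[length pre := z]" by (simp add: L_def list_update_append)
      have "length L = n" by (simp add: n_def)
      then show "map (eval_trm (Omega_op ar U A) (\<sigma>(0 := z))) (map (\<lambda>i. if i = length pre then Var 0 else Var (Suc i)) [0..<n]) ! i = (pre @ z # post) ! i"
        unfolding pz using i by (simp add: nth_list_update \<sigma>_def)
    qed
    then show ?thesis unfolding t_def by simp
  qed
  show ?thesis using E_poly[OF wt s assms(5)] unfolding ev .
qed

lemma E_op_aux:
  assumes "list_all2 (E A) xs ys" "set pre \<subseteq> Omega ar U A" "set xs \<subseteq> Omega ar U A" "length pre + length xs = ar f"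
  shows "E A (Omega_op ar U A f (pre @ xs)) (Omega_op ar U A f (pre @ ys))"
  using assms
proof (induction arbitrary: pre rule: list_all2_induct)
  case Nil then show ?case by (simp add: E_refl)
next
  case (Cons x xs y ys)
  have x: "x \<in> Omega ar U A" using Cons.prems(2) by simp
  have y: "y \<in> Omega ar U A" using E_Omega[OF Cons(1) x] .
  have xs: "set xs \<subseteq> Omega ar U A" using Cons.prems(2) by simp
  have 1: "E A (Omega_op ar U A f (pre @ x # xs)) (Omega_op ar U A f (pre @ y # xs))"
    by (rule E_op1[OF Cons.prems(1) xs x _ Cons(1)]) (use Cons.prems(3) in simp)
  have 2: "E A (Omega_op ar U A f ((pre @ [y]) @ xs)) (Omega_op ar U A f ((pre @ [y]) @ ys))"
    by (rule Cons.IH) (use Cons.prems y in auto)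
  show ?case using E_trans[OF 1 2[simplified]] by simp
qed

lemma E_op:
  assumes "list_all2 (E A) xs ys" "set xs \<subseteq> Omega ar U A" "length xs = ar f"
  shows "E A (Omega_op ar U A f xs) (Omega_op ar U A f ys)"
  using E_op_aux[OF assms(1) _ assms(2), of "[]"] assms(3) by simp

end



locale PVA = PVS ar U \<Sigma> for ar :: "'f::countable \<Rightarrow> nat" and U and \<Sigma> :: "(('f, 'v) trm \<times> ('f, 'v) trm) set" +
  fixes A :: "nat set"
  assumes finA: "finite A"
begin

definition TA :: "('f, nat) trm set" where
  "TA = {t. wf_trm ar t \<and> trm_vars t \<subseteq> A}"

abbreviation om where "om t \<equiv> Omega_trm ar U A t"
abbreviation EE where "EE \<equiv> E A"

definition norm :: "('f, nat) trm \<Rightarrow> nat" where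
  "norm t = (LEAST n. \<exists>s\<in>TA. n = to_nat s \<and> EE (om s) (om t))"

definition Mc where "Mc = norm ` TA"
definition Mop where "Mop f ns = norm (App f (map from_nat ns))"
definition M :: "('f, nat) alg" where "M = (Mc, Mop)"

lemma M_simps [simp]: "ua_carrier M = Mc" "ua_ops M = Mop"
  unfolding M_def ua_carrier_def ua_ops_def by auto

lemma om_in: "t \<in> TA \<Longrightarrow> om t \<in> Omega ar U A"
  unfolding TA_def using Omega_trm(1) by blast

lemma norm_ex:
  assumes "t \<in> TA"
  shows "\<exists>s\<in>TA. norm t = to_nat s \<and> EE (om s) (om t)"
proof -
  have "\<exists>n. \<exists>s\<in>TA. n = to_nat s \<and> EE (om s) (om t)" using assms E_refl by blast
  from LeastI_ex[OF this] show ?thesis unfolding norm_def by blast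
qed

lemma norm_rep:
  assumes "t \<in> TA"
  shows "from_nat (norm t) \<in> TA" "EE (om (from_nat (norm t))) (om t)"
  using norm_ex[OF assms] by auto

lemma norm_eq:
  assumes "s \<in> TA" "t \<in> TA"
  shows "norm s = norm t \<longleftrightarrow> EE (om s) (om t)"
proof
  assume "norm s = norm t"
  then show "EE (om s) (om t)"
    using norm_rep[OF assms(1)] norm_rep[OF assms(2)] E_sym E_trans by metis
next
  assume st: "EE (om s) (om t)"
  have "(\<lambda>n. \<exists>r\<in>TA. n = to_nat r \<and> EE (om r) (om s)) = (\<lambda>n. \<exists>r\<in>TA. n = to_nat r \<and> EE (om r) (om t))"
    using st E_sym E_trans by blast
  then show "norm s = norm t" unfolding norm_def by simp
qed

lemma norm_from_nat:
  assumes "n \<in> Mc" shows "norm (from_nat n) = n" "from_nat n \<in> TA"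
proof -
  obtain s where s: "s \<in> TA" "n = norm s" using assms Mc_def by blast
  show "from_nat n \<in> TA" using norm_rep(1)[OF s(1)] s by simp
  have "norm (from_nat n) = norm s"
    using norm_eq[OF norm_rep(1)[OF s(1)] s(1)] norm_rep(2)[OF s(1)] s by simp
  then show "norm (from_nat n) = n" using s by simp
qed

lemma om_App: "om (App f ts) = Omega_op ar U A f (map om ts)"
  unfolding Omega_trm_def by simp

lemma TA_App: "length ts = ar f \<Longrightarrow> set ts \<subseteq> TA \<Longrightarrow> App f ts \<in> TA"
  unfolding TA_def by (auto simp: list_all_iff)

lemma Mop_norm:
  assumes "set ts \<subseteq> TA" "length ts = ar f"
  shows "Mop f (map norm ts) = norm (App f ts)"
proof -
  let ?ts' = "map (\<lambda>t. from_nat (norm t)) ts"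
  have ts': "set ?ts' \<subseteq> TA" using assms(1) norm_rep(1) by auto
  have a1: "App f ?ts' \<in> TA" using TA_App[OF _ ts'] assms(2) by simp
  have a2: "App f ts \<in> TA" using TA_App assms by blast
  have la: "list_all2 EE (map om ?ts') (map om ts)"
    using assms(1) norm_rep(2) by (induction ts) auto
  have "EE (Omega_op ar U A f (map om ?ts')) (Omega_op ar U A f (map om ts))"
    by (rule E_op[OF la]) (use ts' om_in assms(2) in auto)
  then have "EE (om (App f ?ts')) (om (App f ts))" unfolding om_App .
  then have "norm (App f ?ts') = norm (App f ts)" using norm_eq[OF a1 a2] by simp
  then show ?thesis unfolding Mop_def by (simp add: o_def)
qed

lemma M_alg: "is_alg ar M"
  unfolding is_alg_def M_simps
proof (intro allI impI)
  fix f ns assume a: "set ns \<subseteq> Mc \<and> length ns = ar f"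
  have "set (map from_nat ns) \<subseteq> TA" using a norm_from_nat(2) by auto
  then have "App f (map from_nat ns) \<in> TA" using TA_App a by simp
  then show "Mop f ns \<in> Mc" unfolding Mop_def Mc_def by blast
qed

lemma eval_M:
  assumes "wf_trm ar t" "\<forall>x. \<sigma> x \<in> Mc"
  shows "eval_trm Mop \<sigma> t = norm (subst (\<lambda>x. from_nat (\<sigma> x)) t)"
  using assms(1)
proof (induction t)
  case (Var x) then show ?case using norm_from_nat(1) assms(2) by simp
next
  case (App f ts)
  have sts: "set (map (subst (\<lambda>x. from_nat (\<sigma> x))) ts) \<subseteq> TA"
  proof
    fix s :: "('f, nat) trm" assume "s \<in> set (map (subst (\<lambda>x. from_nat (\<sigma> x))) ts)"
    then obtain t where t: "t \<in> set ts" "s = subst (\<lambda>x. from_nat (\<sigma> x)) t" by auto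
    have wt: "wf_trm ar t" using App.prems t by (simp add: list_all_iff)
    have fn: "from_nat (\<sigma> x) \<in> TA" for x using norm_from_nat(2) assms(2) by blast
    have wfn: "wf_trm ar (from_nat (\<sigma> x) :: ('f, nat) trm)" for x using fn[of x] unfolding TA_def by blast
    have "wf_trm ar (subst (\<lambda>x. from_nat (\<sigma> x) :: ('f, nat) trm) t)"
      by (rule wf_subst[OF wt]) (use wfn in blast)
    moreover have "trm_vars (subst (\<lambda>x. from_nat (\<sigma> x) :: ('f, nat) trm) t) \<subseteq> A"
      unfolding vars_subst using fn by (simp add: TA_def UN_subset_iff)
    ultimately have "wf_trm ar s \<and> trm_vars s \<subseteq> A" using t(2) by simp
    then show "s \<in> TA" unfolding TA_def by simp
  qed
  have "\<forall>s\<in>set ts. eval_trm Mop \<sigma> s = norm (subst (\<lambda>x. from_nat (\<sigma> x)) s)"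
    using App by (simp add: list_all_iff)
  then have m: "map (eval_trm Mop \<sigma>) ts = map (\<lambda>s. norm (subst (\<lambda>x. from_nat (\<sigma> x)) s)) ts"
    by (simp only: map_eq_conv)
  have "eval_trm Mop \<sigma> (App f ts) = Mop f (map (eval_trm Mop \<sigma>) ts)" by (simp only: eval_trm.simps)
  also have "\<dots> = Mop f (map norm (map (subst (\<lambda>x. from_nat (\<sigma> x))) ts))"
    unfolding m by (simp only: map_map o_def)
  also have "\<dots> = norm (App f (map (subst (\<lambda>x. from_nat (\<sigma> x))) ts))"
    by (rule Mop_norm[OF sts]) (use App.prems in simp)
  finally show ?case by (simp only: subst.simps)
qed

end



context PVA begin

lemma M_sat:
  assumes e: "e \<in> \<Sigma>" and s: "\<forall>x. \<sigma> x \<in> Mc"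
  shows "eval_trm Mop \<sigma> (fst e) = eval_trm Mop \<sigma> (snd e)"
proof -
  define \<tau> where "\<tau> x = (from_nat (\<sigma> x) :: ('f, nat) trm)" for x
  have tauTA: "\<tau> x \<in> TA" for x unfolding \<tau>_def using norm_from_nat(2) s by blast
  define B where "B = id_vars e"
  define \<rho> where "\<rho> x = om (\<tau> x)" for x
  have rho: "\<forall>b\<in>B. \<rho> b \<in> Omega ar U A" unfolding \<rho>_def using om_in tauTA by blast
  define g where "g = ext \<rho> B A"
  have gc: "cont_hom_Omega ar U B A g" unfolding g_def by (rule ext_cont[OF rho])
  have wl: "wf_trm ar (fst e)" "wf_trm ar (snd e)" using wfS e by auto
  have vl: "trm_vars (fst e) \<subseteq> B" "trm_vars (snd e) \<subseteq> B" unfolding B_def id_vars_def by auto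
  have gP: "g (Omega_trm ar U B t) = om (subst \<tau> t)" if wt: "wf_trm ar t" and vt: "trm_vars t \<subseteq> B" for t
  proof -
    have gh: "ua_hom ar (Omega_alg ar U B) (Omega_alg ar U A) g" using gc unfolding cont_hom_Omega_def by blast
    have gens: "\<forall>x\<in>trm_vars t. Omega_gen ar U B x \<in> ua_carrier (Omega_alg ar U B)"
      using vt gen_in[of _ B] by auto
    have "g (Omega_trm ar U B t) = eval_trm (ua_ops (Omega_alg ar U A)) (\<lambda>x. g (Omega_gen ar U B x)) t"
      unfolding Omega_trm_def using hom_eval[OF gh Omega_is_alg wt gens] by simp
    also have "\<dots> = eval_trm (Omega_op ar U A) \<rho> t"
      using vt ext_gen[OF rho] unfolding g_def by (auto intro!: eval_cong)
    also have "\<dots> = om (subst \<tau> t)"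
      unfolding Omega_trm_def eval_subst \<rho>_def ..
    finally show ?thesis .
  qed
  define P where "P = Omega_trm ar U B (fst e)"
  define Q where "Q = Omega_trm ar U B (snd e)"
  have gPin: "g P \<in> Omega ar U A"
    using gc Omega_trm(1)[OF wl(1) vl(1)] unfolding cont_hom_Omega_def ua_hom_def P_def by auto
  have "(eval_trm (Omega_op ar U A) ((\<lambda>_. g P)(0 := g P)) (Var 0 :: ('f, nat) trm),
         eval_trm (Omega_op ar U A) ((\<lambda>_. g P)(0 := g Q)) (Var 0 :: ('f, nat) trm)) \<in> Sigma0 ar U \<Sigma> A"
    unfolding Sigma0_def
    apply (rule CollectI)
    apply (rule exI[of _ e], rule exI[of _ P], rule exI[of _ Q], rule exI[of _ g], rule exI[of _ "Var 0"], rule exI[of _ "\<lambda>_. g P"])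
    using e gc gPin unfolding P_def Q_def B_def by simp
  then have "(g P, g Q) \<in> Sigma_tilde ar U \<Sigma> A" using ST_props(1) by auto
  then have "EE (om (subst \<tau> (fst e))) (om (subst \<tau> (snd e)))"
    unfolding E_def P_def Q_def gP[OF wl(1) vl(1)] gP[OF wl(2) vl(2)] by simp
  moreover have "subst \<tau> t \<in> TA" if wt: "wf_trm ar t" for t
  proof -
    have wtau: "wf_trm ar (\<tau> x)" "trm_vars (\<tau> x) \<subseteq> A" for x using tauTA[of x] unfolding TA_def by auto
    have "wf_trm ar (subst \<tau> t)" by (rule wf_subst[OF wt]) (simp add: wtau)
    moreover have "trm_vars (subst \<tau> t) \<subseteq> A" unfolding vars_subst using wtau by blast
    ultimately show ?thesis unfolding TA_def by simp
  qed
  ultimately have "norm (subst \<tau> (fst e)) = norm (subst \<tau> (snd e))" using norm_eq wl by blast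
  then show ?thesis using eval_M[OF wl(1) s] eval_M[OF wl(2) s] unfolding \<tau>_def by simp
qed

lemma M_gen: "ua_generated ar M (norm ` Var ` A) = Mc"
proof
  have G: "norm ` Var ` A \<subseteq> Mc" unfolding Mc_def TA_def by auto
  have "ua_closed ar M Mc" using M_alg unfolding is_alg_def ua_closed_def by simp
  then show "ua_generated ar M (norm ` Var ` A) \<subseteq> Mc"
    unfolding ua_generated_def using G by auto
  show "Mc \<subseteq> ua_generated ar M (norm ` Var ` A)"
    unfolding ua_generated_def
  proof (intro subsetI InterI)
    fix n Y assume n: "n \<in> Mc" and Y: "Y \<in> {Y. norm ` Var ` A \<subseteq> Y \<and> Y \<subseteq> ua_carrier M \<and> ua_closed ar M Y}"
    obtain t where t: "t \<in> TA" "n = norm t" using n Mc_def by blast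
    have "norm t \<in> Y" if "wf_trm ar t" "trm_vars t \<subseteq> A" for t :: "('f, nat) trm"
      using that
    proof (induction t)
      case (Var x) then show ?case using Y by auto
    next
      case (App f ts)
      have ts: "set ts \<subseteq> TA" using App.prems unfolding TA_def by (auto simp: list_all_iff)
      have "set (map norm ts) \<subseteq> Y" using App by (auto simp: list_all_iff)
      then have "Mop f (map norm ts) \<in> Y" using Y App.prems unfolding ua_closed_def by auto
      then show ?case using Mop_norm[OF ts] App.prems by simp
    qed
    then show "n \<in> Y" using t unfolding TA_def by blast
  qed
qed

lemma M_finite:
  assumes lf: "locally_finite_variety ar \<Sigma>"
  shows "finite Mc"
proof -
  have sat: "\<forall>e\<in>\<Sigma>. sat_identity M e"
    unfolding sat_identity_def using M_sat by simp
  have "finite (norm ` Var ` A)" using finA by simp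
  moreover have "norm ` Var ` A \<subseteq> ua_carrier M" unfolding M_simps Mc_def TA_def by auto
  moreover have lfM: "is_alg ar M \<and> (\<forall>e\<in>\<Sigma>. sat_identity M e) \<longrightarrow> (\<forall>G. finite G \<and> G \<subseteq> ua_carrier M \<and> ua_generated ar M G = ua_carrier M
             \<longrightarrow> finite (ua_carrier M))"
    using lf[unfolded locally_finite_variety_def, THEN spec[of _ M]] .
  ultimately have "finite (ua_carrier M)"
    using M_alg sat M_gen by (metis M_simps(1))
  then show ?thesis by simp
qed

lemma dense:
  assumes x: "x \<in> Omega ar U A" and N: "openin (Omega_top ar U A) N" and xN: "x \<in> N"
  shows "\<exists>t\<in>TA. om t \<in> N"
proof -
  obtain N' where N': "openin (PT A) N'" "N = N' \<inter> Omega ar U A"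
    using N unfolding Omega_top_def openin_subtopology by blast
  have xN': "x \<in> N'" using xN N'(2) by blast
  have "\<exists>W. finite {i \<in> Omega_idx ar U A. W i \<noteq> topspace (discrete_topology (ua_carrier (fst i)))} \<and>
      (\<forall>i\<in>Omega_idx ar U A. openin (discrete_topology (ua_carrier (fst i))) (W i)) \<and>
      x \<in> Pi\<^sub>E (Omega_idx ar U A) W \<and> Pi\<^sub>E (Omega_idx ar U A) W \<subseteq> N'"
    using N'(1)[unfolded openin_product_topology_alt] xN' by (rule bspec)
  then obtain W where W: "finite {i \<in> Omega_idx ar U A. W i \<noteq> topspace (discrete_topology (ua_carrier (fst i)))}"
      "\<forall>i\<in>Omega_idx ar U A. openin (discrete_topology (ua_carrier (fst i))) (W i)"
      "x \<in> Pi\<^sub>E (Omega_idx ar U A) W" "Pi\<^sub>E (Omega_idx ar U A) W \<subseteq> N'"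
    by (elim exE conjE) (rule that)
  define K where "K = {i \<in> Omega_idx ar U A. W i \<noteq> topspace (discrete_topology (ua_carrier (fst i)))}"
  have K: "finite K" "K \<subseteq> Omega_idx ar U A" using W(1) unfolding K_def by auto
  obtain k0 where k0: "k0 \<in> Omega_idx ar U A"
    and hk: "\<forall>k\<in>K. \<exists>h. ua_hom ar (fst k0) (fst k) h \<and> (\<forall>a\<in>A. h (snd k0 a) = snd k a)"
    using dominate[OF K] by blast
  have S0: "is_alg ar (fst k0)" using U_alg idx_D(1)[OF k0] by blast
  have phi0: "snd k0 ` A \<subseteq> ua_carrier (fst k0)" using idx_D(2)[OF k0] by auto
  have "x k0 \<in> evals ar (fst k0) (snd k0) A"
    using Omega_coord_in[OF x k0] idx_D(3)[OF k0] gen_eval[OF S0 phi0] by simp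
  then obtain t where t: "wf_trm ar t" "trm_vars t \<subseteq> A" "x k0 = eval_trm (ua_ops (fst k0)) (snd k0) t"
    unfolding evals_def by blast
  have tTA: "t \<in> TA" using t unfolding TA_def by simp
  have agree: "om t k = x k" if k: "k \<in> K" for k
  proof -
    obtain h where h: "ua_hom ar (fst k0) (fst k) h" "\<forall>a\<in>A. h (snd k0 a) = snd k a" using hk k by blast
    have kI: "k \<in> Omega_idx ar U A" using k K by auto
    have "h (x k0) = eval_trm (ua_ops (fst k)) (\<lambda>a. h (snd k0 a)) t"
      unfolding t(3) by (rule hom_eval[OF h(1) S0 t(1)]) (use t(2) phi0 in auto)
    also have "\<dots> = eval_trm (ua_ops (fst k)) (snd k) t" using h(2) t(2) by (intro eval_cong) auto
    also have "\<dots> = om t k" using Omega_trm(2)[OF t(1,2) kI] by simp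
    finally have 1: "h (x k0) = om t k" .
    obtain S0' \<phi>0 where k0e: "k0 = (S0', \<phi>0)" by (cases k0)
    obtain T' \<psi> where ke: "k = (T', \<psi>)" by (cases k)
    have "h (x (S0', \<phi>0)) = x (T', \<psi>)"
      by (rule Omega_D(2)[OF x]) (use k0 kI h k0e ke in auto)
    then show ?thesis using 1 k0e ke by simp
  qed
  have omt: "om t \<in> Omega ar U A" using om_in[OF tTA] .
  have "om t \<in> Pi\<^sub>E (Omega_idx ar U A) W"
  proof (rule PiE_I)
    fix i assume i: "i \<in> Omega_idx ar U A"
    show "om t i \<in> W i"
    proof (cases "i \<in> K")
      case True
      have "x i \<in> W i" by (rule PiE_mem[OF W(3) i])
      then show ?thesis using agree[OF True] by simp
    next
      case False then have "W i = topspace (discrete_topology (ua_carrier (fst i)))" using i unfolding K_def by blast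
      then have "W i = ua_carrier (fst i)" by simp
      then show ?thesis using Omega_coord_in[OF omt i] by simp
    qed
  next
    fix i assume "i \<notin> Omega_idx ar U A"
    then show "om t i = undefined" by (rule PiE_arb[OF Omega_D(1)[OF omt]])
  qed
  then have "om t \<in> N'" using W(4) by (rule subsetD[rotated])
  then have "om t \<in> N" using N'(2) omt by simp
  then show ?thesis using tTA by blast
qed

definition rep where "rep n = om (from_nat n)"
definition Cl where "Cl n = {y \<in> Omega ar U A. EE y (rep n)}"

lemma rep_in: "n \<in> Mc \<Longrightarrow> rep n \<in> Omega ar U A"
  unfolding rep_def using om_in norm_from_nat(2) by blast

lemma Cl_closed:
  assumes n: "n \<in> Mc" shows "closedin (Omega_top ar U A) (Cl n)"
proof -
  have r: "rep n \<in> Omega ar U A" using rep_in[OF n] .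
  have c: "continuous_map (Omega_top ar U A) (PP A) (\<lambda>y. (y, rep n))"
    by (intro continuous_map_pairedI) (use r in auto)
  have 1: "closedin (Omega_top ar U A) {y \<in> topspace (Omega_top ar U A). (y, rep n) \<in> Sigma_tilde ar U \<Sigma> A}"
    by (rule closedin_continuous_map_preimage[OF c ST_props(3)])
  have 2: "closedin (Omega_top ar U A) {rep n}"
    by (rule closedin_Hausdorff_singleton[OF OT_Hausdorff]) (use r in simp)
  have "Cl n = {y \<in> topspace (Omega_top ar U A). (y, rep n) \<in> Sigma_tilde ar U \<Sigma> A} \<union> {rep n}"
    unfolding Cl_def E_def using r by auto
  then show ?thesis using closedin_Un[OF 1 2] by simp
qed

lemma cover:
  assumes lf: "locally_finite_variety ar \<Sigma>" and x: "x \<in> Omega ar U A"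
  shows "\<exists>n\<in>Mc. x \<in> Cl n"
proof (rule ccontr)
  assume nx: "\<not> (\<exists>n\<in>Mc. x \<in> Cl n)"
  have fin: "finite Mc" using M_finite[OF lf] .
  define N where "N = Omega ar U A - \<Union>(Cl ` Mc)"
  have "closedin (Omega_top ar U A) (\<Union>(Cl ` Mc))"
    by (rule closedin_Union) (use fin Cl_closed in auto)
  then have "openin (Omega_top ar U A) N"
    unfolding N_def using openin_diff[OF openin_topspace[of "Omega_top ar U A"]] by simp
  moreover have "x \<in> N" using x nx unfolding N_def by blast
  ultimately obtain t where t: "t \<in> TA" "om t \<in> N" using dense[OF x] by blast
  have "norm t \<in> Mc" using t(1) unfolding Mc_def by blast
  moreover have "om t \<in> Cl (norm t)"
    unfolding Cl_def rep_def using om_in[OF t(1)] norm_rep(2)[OF t(1)] E_sym by blast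
  ultimately show False using t(2) unfolding N_def by blast
qed

end



context PV begin

lemma Omega_hom:
  assumes "x \<in> Omega ar U A" "k0 \<in> Omega_idx ar U A" "k \<in> Omega_idx ar U A"
    "ua_hom ar (fst k0) (fst k) h" "\<forall>a\<in>A. h (snd k0 a) = snd k a"
  shows "h (x k0) = x k"
proof -
  obtain S \<phi> where k0e: "k0 = (S, \<phi>)" by (cases k0)
  obtain T \<psi> where ke: "k = (T, \<psi>)" by (cases k)
  have "h (x (S, \<phi>)) = x (T, \<psi>)"
    by (rule Omega_D(2)[OF assms(1)]) (use assms k0e ke in simp_all)
  then show ?thesis using k0e ke by simp
qed

end

context PVA begin

lemma k0_ex:
  assumes lf: "locally_finite_variety ar \<Sigma>"
  shows "\<exists>k0\<in>Omega_idx ar U A. \<forall>x\<in>Omega ar U A. \<forall>y\<in>Omega ar U A. x k0 = y k0 \<longrightarrow> EE x y"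
proof -
  have fin: "finite Mc" using M_finite[OF lf] .
  define W where "W = {z \<in> Omega ar U A \<times> Omega ar U A. \<not> EE (fst z) (snd z)}"
  define Cs where "Cs = (\<lambda>(n, m). Cl n \<times> Cl m) ` {(n, m) \<in> Mc \<times> Mc. n \<noteq> m}"
  have WC: "W = \<Union>Cs"
  proof (intro equalityI subsetI)
    fix z assume z: "z \<in> W"
    obtain x y where xy: "z = (x, y)" by (cases z)
    have x: "x \<in> Omega ar U A" and y: "y \<in> Omega ar U A" and nE: "\<not> EE x y"
      using z xy unfolding W_def by auto
    obtain n where n: "n \<in> Mc" "x \<in> Cl n" using cover[OF lf x] by blast
    obtain m where m: "m \<in> Mc" "y \<in> Cl m" using cover[OF lf y] by blast
    have "n \<noteq> m"
    proof
      assume "n = m"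
      then have 1: "EE x (rep n)" and 2: "EE y (rep n)" using n m unfolding Cl_def by auto
      have "EE x y" by (rule E_trans[OF 1 E_sym[OF 2]])
      then show False using nE by simp
    qed
    then have "(n, m) \<in> {(n, m) \<in> Mc \<times> Mc. n \<noteq> m}" using n m by simp
    then have "Cl n \<times> Cl m \<in> Cs" unfolding Cs_def by (rule rev_image_eqI) simp
    moreover have "z \<in> Cl n \<times> Cl m" using xy n m by simp
    ultimately show "z \<in> \<Union>Cs" by blast
  next
    fix z assume "z \<in> \<Union>Cs"
    then obtain n m where nm: "n \<in> Mc" "m \<in> Mc" "n \<noteq> m" and z: "z \<in> Cl n \<times> Cl m"
      unfolding Cs_def by auto
    obtain x y where xy: "z = (x, y)" by (cases z)
    have x: "x \<in> Cl n" and y: "y \<in> Cl m" using z xy by auto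
    have "\<not> EE x y"
    proof
      assume "EE x y"
      have 1: "EE x (rep n)" and 2: "EE y (rep m)" using x y unfolding Cl_def by auto
      have "EE (rep n) (rep m)" by (rule E_trans[OF E_trans[OF E_sym[OF 1] \<open>EE x y\<close>] 2])
      then have "norm (from_nat n) = norm (from_nat m)"
        unfolding rep_def using norm_eq[OF norm_from_nat(2)[OF nm(1)] norm_from_nat(2)[OF nm(2)]] by simp
      then show False using norm_from_nat(1) nm by simp
    qed
    then show "z \<in> W" unfolding W_def using x y xy unfolding Cl_def by simp
  qed
  have Wc: "closedin (PP A) W"
    unfolding WC
  proof (rule closedin_Union)
    have "{(n, m) \<in> Mc \<times> Mc. n \<noteq> m} \<subseteq> Mc \<times> Mc" by blast
    moreover have "finite (Mc \<times> Mc)" using fin by simp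
    ultimately have "finite {(n, m) \<in> Mc \<times> Mc. n \<noteq> m}" by (rule finite_subset)
    then show "finite Cs" unfolding Cs_def by (rule finite_imageI)
    fix C assume "C \<in> Cs"
    then obtain n m where "n \<in> Mc" "m \<in> Mc" "C = Cl n \<times> Cl m" unfolding Cs_def by auto
    then show "closedin (PP A) C" using Cl_closed by (simp add: closedin_prod_Times_iff)
  qed
  have "compact_space (PP A)" using OT_compact[of A] by (simp add: compact_space_prod_topology)
  then have cW: "compactin (PP A) W" using Wc by (rule closedin_compact_space)
  define Cr where "Cr k = ua_carrier (fst k)" for k :: "('f, nat) alg \<times> (nat \<Rightarrow> nat)"
  define Ok where "Ok k = {z \<in> topspace (PP A). (fst z k, snd z k) \<in> (Cr k \<times> Cr k) \<inter> {p. fst p \<noteq> snd p}}" for k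
  have Oopen: "openin (PP A) (Ok k)" if k: "k \<in> Omega_idx ar U A" for k
  proof -
    have c1: "continuous_map (Omega_top ar U A) (discrete_topology (Cr k)) (\<lambda>x. x k)"
      by (rule cont_from_OT[of "{k}"]) (use k Omega_coord_in[of _ A k] in \<open>auto simp: Cr_def\<close>)
    have cf: "continuous_map (PP A) (discrete_topology (Cr k)) (\<lambda>z. fst z k)"
      using continuous_map_compose[OF continuous_map_fst c1] by (simp add: o_def)
    have cs: "continuous_map (PP A) (discrete_topology (Cr k)) (\<lambda>z. snd z k)"
      using continuous_map_compose[OF continuous_map_snd c1] by (simp add: o_def)
    have "continuous_map (PP A) (prod_topology (discrete_topology (Cr k)) (discrete_topology (Cr k))) (\<lambda>z. (fst z k, snd z k))"
      by (rule continuous_map_pairedI[OF cf cs])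
    then have c: "continuous_map (PP A) (discrete_topology (Cr k \<times> Cr k)) (\<lambda>z. (fst z k, snd z k))"
      by (simp add: prod_topology_discrete_topology)
    show ?thesis unfolding Ok_def
      by (rule openin_continuous_map_preimage[OF c]) simp
  qed
  have Wcov: "W \<subseteq> \<Union>(Ok ` Omega_idx ar U A)"
  proof
    fix z assume z: "z \<in> W"
    obtain x y where xy: "z = (x, y)" by (cases z)
    have x: "x \<in> Omega ar U A" and y: "y \<in> Omega ar U A" and nE: "\<not> EE x y"
      using z xy unfolding W_def by auto
    have "x \<noteq> y" using nE E_refl by metis
    then obtain k where k: "k \<in> Omega_idx ar U A" "x k \<noteq> y k"
      using PiE_ext[OF Omega_D(1)[OF x] Omega_D(1)[OF y]] by blast
    have "z \<in> Ok k" unfolding Ok_def Cr_def using xy x y k Omega_coord_in[of _ A k] by auto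
    then show "z \<in> \<Union>(Ok ` Omega_idx ar U A)" using k by blast
  qed
  have allO: "\<forall>V\<in>Ok ` Omega_idx ar U A. openin (PP A) V" using Oopen by blast
  have "\<exists>F. finite F \<and> F \<subseteq> Ok ` Omega_idx ar U A \<and> W \<subseteq> \<Union>F"
    using cW[unfolded compactin_def, THEN conjunct2, THEN spec[of _ "Ok ` Omega_idx ar U A"]] allO Wcov by blast
  then obtain F where F: "finite F" "F \<subseteq> Ok ` Omega_idx ar U A" "W \<subseteq> \<Union>F" by blast
  obtain K where K: "K \<subseteq> Omega_idx ar U A" "finite K" "F = Ok ` K"
    using finite_subset_image[OF F(1) F(2)] by blast
  obtain k0 where k0: "k0 \<in> Omega_idx ar U A"
    and hk: "\<forall>k\<in>K. \<exists>h. ua_hom ar (fst k0) (fst k) h \<and> (\<forall>a\<in>A. h (snd k0 a) = snd k a)"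
    using dominate[OF K(2,1)] by blast
  have "\<forall>x\<in>Omega ar U A. \<forall>y\<in>Omega ar U A. x k0 = y k0 \<longrightarrow> EE x y"
  proof (intro ballI impI)
    fix x y assume x: "x \<in> Omega ar U A" and y: "y \<in> Omega ar U A" and e: "x k0 = y k0"
    show "EE x y"
    proof (rule ccontr)
      assume "\<not> EE x y"
      then have "(x, y) \<in> W" unfolding W_def using x y by simp
      then obtain k where k: "k \<in> K" "(x, y) \<in> Ok k" using F(3) K(3) by blast
      obtain h where h: "ua_hom ar (fst k0) (fst k) h" "\<forall>a\<in>A. h (snd k0 a) = snd k a" using hk k by blast
      have kI: "k \<in> Omega_idx ar U A" using k K by blast
      have "x k = y k"
        using Omega_hom[OF x k0 kI h] Omega_hom[OF y k0 kI h] e by simp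
      then show False using k(2) unfolding Ok_def by simp
    qed
  qed
  then show ?thesis using k0 by blast
qed

end

locale PVK = PVA ar U \<Sigma> A for ar :: "'f::countable \<Rightarrow> nat" and U and \<Sigma> :: "(('f, 'v) trm \<times> ('f, 'v) trm) set" and A +
  fixes k0
  assumes k0: "k0 \<in> Omega_idx ar U A"
    and k0p: "\<forall>x\<in>Omega ar U A. \<forall>y\<in>Omega ar U A. x k0 = y k0 \<longrightarrow> EE x y"
begin

abbreviation ev0 where "ev0 t \<equiv> eval_trm (ua_ops (fst k0)) (snd k0) t"

lemma S0_alg: "is_alg ar (fst k0)" using U_alg idx_D(1)[OF k0] by blast
lemma phi0: "snd k0 ` A \<subseteq> ua_carrier (fst k0)" using idx_D(2)[OF k0] by auto

lemma carr0: "m \<in> ua_carrier (fst k0) \<Longrightarrow> \<exists>t\<in>TA. m = ev0 t"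
  using idx_D(3)[OF k0] gen_eval[OF S0_alg phi0] unfolding evals_def TA_def by auto

lemma ev0_in: "t \<in> TA \<Longrightarrow> ev0 t \<in> ua_carrier (fst k0)"
  using eval_in[OF S0_alg] phi0 unfolding TA_def by blast

definition H where "H m = norm (SOME t. t \<in> TA \<and> ev0 t = m)"

lemma om_k0: "t \<in> TA \<Longrightarrow> om t k0 = ev0 t"
  using Omega_trm(2)[OF _ _ k0] unfolding TA_def by blast

lemma H_eq: assumes t: "t \<in> TA" shows "H (ev0 t) = norm t"
proof -
  have "\<exists>t'. t' \<in> TA \<and> ev0 t' = ev0 t" using t by blast
  from someI_ex[OF this] obtain t' where t': "t' \<in> TA" "ev0 t' = ev0 t"
    and H: "H (ev0 t) = norm t'" unfolding H_def by blast
  have "om t' k0 = om t k0" using om_k0 t t' by simp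
  then have "EE (om t') (om t)" using k0p om_in t t' by blast
  then show ?thesis using H norm_eq[OF t'(1) t] by simp
qed

lemma H_hom: "ua_hom ar (fst k0) M H"
  unfolding ua_hom_def M_simps
proof (intro conjI allI impI)
  show "H \<in> ua_carrier (fst k0) \<rightarrow> Mc"
  proof
    fix m assume "m \<in> ua_carrier (fst k0)"
    then obtain t where t: "t \<in> TA" "m = ev0 t" using carr0 by blast
    then show "H m \<in> Mc" using H_eq unfolding Mc_def by simp
  qed
next
  fix f ms assume a: "set ms \<subseteq> ua_carrier (fst k0) \<and> length ms = ar f"
  then have "\<forall>m\<in>set ms. \<exists>t. t \<in> TA \<and> m = ev0 t" using carr0 by blast
  from list_choice[OF this] obtain ts where ts: "list_all2 (\<lambda>m t. t \<in> TA \<and> m = ev0 t) ms ts" by blast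
  have ms: "ms = map ev0 ts" using ts by (induction rule: list_all2_induct) auto
  have tsTA: "set ts \<subseteq> TA" using ts by (induction rule: list_all2_induct) auto
  have len: "length ts = ar f" using a list_all2_lengthD[OF ts] by simp
  have App: "App f ts \<in> TA" using TA_App[OF len tsTA] .
  have "ua_ops (fst k0) f ms = ev0 (App f ts)" using ms by simp
  then have "H (ua_ops (fst k0) f ms) = norm (App f ts)" using H_eq[OF App] by simp
  also have "\<dots> = Mop f (map norm ts)" using Mop_norm[OF tsTA len] by simp
  also have "map norm ts = map H ms" unfolding ms using tsTA H_eq by auto
  finally show "H (ua_ops (fst k0) f ms) = Mop f (map H ms)" .
qed

lemma H_surj: "H ` ua_carrier (fst k0) = Mc"
proof (intro equalityI subsetI)
  fix n assume "n \<in> H ` ua_carrier (fst k0)"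
  then show "n \<in> Mc" using H_hom unfolding ua_hom_def by auto
next
  fix n assume "n \<in> Mc"
  then obtain t where t: "t \<in> TA" "n = norm t" unfolding Mc_def by blast
  then have "n = H (ev0 t)" using H_eq by simp
  then show "n \<in> H ` ua_carrier (fst k0)" using ev0_in[OF t(1)] by blast
qed

lemma M_U: "M \<in> U"
  using U_hom_image[OF idx_D(1)[OF k0] M_alg H_hom] H_surj by simp

lemma M_model: "in_model ar U \<Sigma> M"
  unfolding in_model_def
proof (intro conjI ballI)
  show "M \<in> U" by (rule M_U)
  fix e assume e: "e \<in> \<Sigma>"
  define B where "B = id_vars e"
  have wl: "wf_trm ar (fst e)" "wf_trm ar (snd e)" using wfS e by auto
  have vl: "trm_vars (fst e) \<subseteq> B" "trm_vars (snd e) \<subseteq> B" unfolding B_def id_vars_def by auto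
  show "pi_holds ar U M (id_vars e) (Omega_trm ar U (id_vars e) (fst e)) (Omega_trm ar U (id_vars e) (snd e))"
    unfolding pi_holds_def B_def[symmetric]
  proof (intro allI impI)
    fix \<phi> h assume a: "\<phi> \<in> B \<rightarrow> ua_carrier M \<and> cont_hom_to_alg ar U B M h \<and> (\<forall>b\<in>B. h (Omega_gen ar U B b) = \<phi> b)"
    have hh: "ua_hom ar (Omega_alg ar U B) M h" using a unfolding cont_hom_to_alg_def by blast
    have hin: "h y \<in> Mc" if "y \<in> Omega ar U B" for y using hh that unfolding ua_hom_def by auto
    define d where "d = h (Omega_trm ar U B (fst e))"
    have d: "d \<in> Mc" unfolding d_def using hin Omega_trm(1)[OF wl(1) vl(1)] by blast
    define \<sigma> where "\<sigma> x = (if x \<in> B then h (Omega_gen ar U B x) else d)" for x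
    have s: "\<forall>x. \<sigma> x \<in> Mc" unfolding \<sigma>_def using d hin gen_in[of _ B] by auto
    have key: "h (Omega_trm ar U B t) = eval_trm Mop \<sigma> t" if wt: "wf_trm ar t" and vt: "trm_vars t \<subseteq> B" for t
    proof -
      have gens: "\<forall>x\<in>trm_vars t. Omega_gen ar U B x \<in> ua_carrier (Omega_alg ar U B)"
        using vt gen_in[of _ B] by auto
      have "h (Omega_trm ar U B t) = eval_trm (ua_ops M) (\<lambda>x. h (Omega_gen ar U B x)) t"
        unfolding Omega_trm_def using hom_eval[OF hh Omega_is_alg wt gens] by simp
      also have "\<dots> = eval_trm Mop \<sigma> t"
        using vt unfolding \<sigma>_def by (auto intro!: eval_cong)
      finally show ?thesis .
    qed
    show "h (Omega_trm ar U B (fst e)) = h (Omega_trm ar U B (snd e))"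
      using key[OF wl(1) vl(1)] key[OF wl(2) vl(2)] M_sat[OF e s] by simp
  qed
qed

lemma main:
  assumes u: "u \<in> Omega ar U A" and v: "v \<in> Omega ar U A"
    and valid: "\<forall>T. in_model ar U \<Sigma> T \<longrightarrow> pi_holds ar U T A u v"
  shows "provable ar U \<Sigma> A u v"
proof -
  define h0 where "h0 x = H (x k0)" for x :: "(('f, nat) alg \<times> (nat \<Rightarrow> nat)) \<Rightarrow> nat"
  have coord: "x k0 \<in> ua_carrier (fst k0)" if "x \<in> Omega ar U A" for x using Omega_coord_in[OF that k0] .
  have h0in: "h0 x \<in> Mc" if "x \<in> Omega ar U A" for x
    using H_hom coord[OF that] unfolding h0_def ua_hom_def by auto
  have hom: "ua_hom ar (Omega_alg ar U A) M h0"
    unfolding ua_hom_def Omega_alg_simps M_simps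
  proof (intro conjI allI impI)
    show "h0 \<in> Omega ar U A \<rightarrow> Mc" using h0in by blast
    fix f xs assume a: "set xs \<subseteq> Omega ar U A \<and> length xs = ar f"
    have cs: "set (map (\<lambda>x. x k0) xs) \<subseteq> ua_carrier (fst k0)" using a coord by auto
    have "h0 (Omega_op ar U A f xs) = H (ua_ops (fst k0) f (map (\<lambda>x. x k0) xs))"
      unfolding h0_def using Omega_op_coord[OF k0] by simp
    also have "\<dots> = Mop f (map H (map (\<lambda>x. x k0) xs))"
      using H_hom cs a unfolding ua_hom_def M_simps by simp
    also have "map H (map (\<lambda>x. x k0) xs) = map h0 xs" unfolding h0_def by simp
    finally show "h0 (Omega_op ar U A f xs) = Mop f (map h0 xs)" .
  qed
  have cont: "continuous_map (Omega_top ar U A) (discrete_topology (ua_carrier M)) h0"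
    by (rule cont_from_OT[of "{k0}"]) (use k0 h0in in \<open>auto simp: h0_def\<close>)
  have "cont_hom_to_alg ar U A M h0" unfolding cont_hom_to_alg_def using hom cont by blast
  moreover have "(\<lambda>a. h0 (Omega_gen ar U A a)) \<in> A \<rightarrow> ua_carrier M" using h0in gen_in[of _ A] by auto
  ultimately have "h0 u = h0 v"
    using valid M_model unfolding pi_holds_def by blast
  have rep: "\<exists>t\<in>TA. h0 x = norm t \<and> EE (om t) x" if x: "x \<in> Omega ar U A" for x
  proof -
    obtain t where t: "t \<in> TA" "x k0 = ev0 t" using carr0 coord[OF x] by blast
    have "h0 x = norm t" unfolding h0_def t(2) using H_eq[OF t(1)] .
    moreover have "EE (om t) x" using k0p om_in[OF t(1)] x om_k0[OF t(1)] t(2) by simp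
    ultimately show ?thesis using t(1) by blast
  qed
  obtain tu where tu: "tu \<in> TA" "h0 u = norm tu" "EE (om tu) u" using rep[OF u] by blast
  obtain tv where tv: "tv \<in> TA" "h0 v = norm tv" "EE (om tv) v" using rep[OF v] by blast
  have "norm tu = norm tv" using tu tv \<open>h0 u = h0 v\<close> by simp
  then have "EE (om tu) (om tv)" using norm_eq[OF tu(1) tv(1)] by simp
  then have "EE u v" by (rule E_trans[OF E_trans[OF E_sym[OF tu(3)]] tv(3)])
  then show ?thesis unfolding provable_def E_def .
qed

end

theorem theorem5p1:
  fixes ar :: "'f::finite \<Rightarrow> nat"
    and U :: "('f, nat) alg set"
    and \<Sigma> :: "(('f, nat) trm \<times> ('f, nat) trm) set"
  assumes "pseudovariety ar U"
    and "\<forall>e\<in>\<Sigma>. wf_trm ar (fst e) \<and> wf_trm ar (snd e)"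
    and "locally_finite_variety ar \<Sigma>"
  shows "h_strong ar U \<Sigma>"
  unfolding h_strong_def
proof (intro allI impI ballI)
  fix A :: "nat set" and u v
  assume A: "finite A" and u: "u \<in> Omega ar U A" and v: "v \<in> Omega ar U A"
    and valid: "\<forall>T. in_model ar U \<Sigma> T \<longrightarrow> pi_holds ar U T A u v"
  interpret PVA ar U \<Sigma> A
    by unfold_locales (use assms A in auto)
  obtain k0 where k0: "k0 \<in> Omega_idx ar U A"
    and k0p: "\<forall>x\<in>Omega ar U A. \<forall>y\<in>Omega ar U A. x k0 = y k0 \<longrightarrow> E A x y"
    using k0_ex[OF assms(3)] by blast
  interpret PVK ar U \<Sigma> A k0
    by unfold_locales (use k0 k0p in auto)
  show "provable ar U \<Sigma> A u v" by (rule main[OF u v valid])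
qed


end
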